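(* Assume (RHS.1), (RHS.2a), (BC.1), (BC.2), and that there is $\alpha\in(0,1]$ with $f\in C^{0,\alpha}(\overline\Omega)$, $g\in C^{0,\alpha}(\partial\Omega)$, and with the viscosity solution $u$ of $-\Delta^\diamond_\infty u=f$ in $\Omega$, $u=g$ on $\partial\Omega$ satisfying $u\in C^{0,\alpha}(\overline\Omega)$. Choose the parameters so that $\varepsilon\approx h^{\alpha/(2+\alpha)}$ and $\varepsilon\theta\approx h$ (i.e., comparable up to fixed positive constants). Then, for $h$ sufficiently small, the solution $u_{\mathfrak h}$ of the discrete problem satisfies $$\|u-u_{\mathfrak h}\|_{L^\infty(\Omega_h)}\lesssim h^{\alpha^2/(2+\alpha)}.$$ In particular, if $u\in C^{0,1}(\overline\Omega)$ (i.e., $\alpha=1$), then $\|u-u_{\mathfrak h}\|_{L^\infty(\Omega_h)}\lesssim h^{1/3}$. The implied constants depend on $d$, $\Omega$, the shape regularity of the meshes, $\min_{\overline\Omega}|f|$, and the $C^{0,\alpha}$ norms of $f$, $g$, $u$.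
   Context: Setting: $\Omega\subset\mathbb R^d$ ($d\ge1$) is a bounded domain with continuous boundary. For $r>0$, $\Omega^{(r)}=\{x\in\Omega:\operatorname{dist}(x,\partial\Omega)>r\}$. $\{\mathcal T_h\}_{h>0}$ is a quasiuniform family of meshes of closed simplices, $h=\max_{T}\operatorname{diam}T$, $\Omega_h$ the interior of the union of the simplices, with $\Omega^{(h)}\subset\Omega_h\subset\Omega$; $\mathcal N_h$ is the set of vertices. $\mathbb V_h$ is the space of continuous piecewise linear functions on $\mathcal T_h$, and $\mathcal I_h$ is the Lagrange interpolant. Parameters $\mathfrak h=(h,\varepsilon,\theta)$ with $\varepsilon\in[h,\operatorname{diam}\Omega]$, $0<\theta\le1$. Interior nodes $\mathcal N_h^I=\mathcal N_h\cap\Omega^{(2\varepsilon)}$; boundary nodes $\mathcal N_h^b=\mathcal N_h\setminus\mathcal N_h^I$. $\mathbb S_\theta$ is a finite symmetric subset of the unit sphere $\mathbb S$ such that each $v\in\mathbb S$ has $v_\theta\in\mathbb S_\theta$ with $|v-v_\theta|\le\theta$. For $z\in\mathcal N_h^I$, $\mathcal N_{\mathfrak h}(z)=\{z\}\cup\{z+\varepsilon v_\theta:v_\theta\in\mathbb S_\theta\}$ and, for $w\in C(\overline\Omega)$, $-\Delta^\diamond_{\infty,\mathfrak h}w(z)=\varepsilon^{-2}\big(2w(z)-\max_{x\in\mathcal N_{\mathfrak h}(z)}\mathcal I_hw(x)-\min_{x\in\mathcal N_{\mathfrak h}(z)}\mathcal I_hw(x)\big)$. Assumptions: (RHS.1)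 $f\in C(\Omega)\cap L^\infty(\Omega)$. (RHS.2a) $\sup_\Omega f<0$ or $\inf_\Omega f>0$. (BC.1) $g\in C(\partial\Omega)$. (BC.2) for every $\varepsilon>0$ a function $\tilde g_\varepsilon\in C(\overline\Omega)$ is given such that, if $g\in C^{0,\alpha}(\partial\Omega)$ for some $\alpha\in[0,1]$, then $\tilde g_\varepsilon\in C^{0,\alpha}(\overline\Omega)$ and $\|g-\tilde g_\varepsilon\|_{L^\infty(\partial\Omega)}\le C\varepsilon^\alpha$. Discrete problem: find $u_{\mathfrak h}\in\mathbb V_h$ with $-\Delta^\diamond_{\infty,\mathfrak h}u_{\mathfrak h}(z)=f(z)$, $z\in\mathcal N_h^I$, and $u_{\mathfrak h}(z)=\tilde g_\varepsilon(z)$, $z\in\mathcal N_h^b$. Continuous problem: $\Delta^\diamond_\infty\varphi=|D\varphi|^{-2}D\varphi^\intercal D^2\varphi D\varphi$ where $D\varphi\ne0$; $\Delta^\pm_\infty\varphi(x)$ equal this if $D\varphi(x)\ne0$ and $\lambda_{\max}$, resp. $\lambda_{\min}$, of $D^2\varphi(x)$ if $D\varphi(x)=0$. The viscosity solution $u\in C(\overline\Omega)$ satisfies $u=g$ on $\partial\Omega$ and, for all $x_0\in\Omega$, $\varphi\in C^2$: $u-\varphi$ local max at $x_0$ implies $-\Delta^+_\infty\varphi(x_0)\le f(x_0)$; $u-\varphi$ local min at $x_0$ implies $-\Delta^-_\infty\varphi(x_0)\ge f(x_0)$. It exists and is unique. *)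

theory Defs
  imports "HOL-Analysis.Analysis"
begin

definition inner_set :: "'a::euclidean_space set \<Rightarrow> real \<Rightarrow> 'a set" where
  "inner_set \<Omega> r = {x \<in> \<Omega>. infdist x (frontier \<Omega>) > r}"

text \<open>Bounded domain with continuous boundary: locally, in a suitable direction \<open>e\<close>,
  \<open>\<Omega>\<close> is the strict epigraph of a continuous function on the hyperplane \<open>e\<^sup>\<perp>\<close>.\<close>
definition continuous_boundary :: "'a::euclidean_space set \<Rightarrow> bool" where
  "continuous_boundary \<Omega> \<longleftrightarrow>
     (\<forall>x0 \<in> frontier \<Omega>. \<exists>r>0. \<exists>e \<phi>. norm e = 1 \<and>
        continuous_on {y. y \<bullet> e = 0} (\<phi> :: 'a \<Rightarrow> real) \<and>
        ball x0 r \<inter> \<Omega> = {x \<in> ball x0 r. x \<bullet> e > \<phi> (x - (x \<bullet> e) *\<^sub>R e)})"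

definition bounded_domain_cont_bdry :: "'a::euclidean_space set \<Rightarrow> bool" where
  "bounded_domain_cont_bdry \<Omega> \<longleftrightarrow> open \<Omega> \<and> connected \<Omega> \<and> \<Omega> \<noteq> {} \<and> bounded \<Omega>
     \<and> continuous_boundary \<Omega>"

definition holder_const :: "real \<Rightarrow> real \<Rightarrow> 'a::metric_space set \<Rightarrow> ('a \<Rightarrow> real) \<Rightarrow> bool" where
  "holder_const \<alpha> L S w \<longleftrightarrow> (\<forall>x\<in>S. \<forall>y\<in>S. \<bar>w x - w y\<bar> \<le> L * dist x y powr \<alpha>)"

text \<open>\<open>w \<in> C^{0,\<alpha>}(S)\<close> (for \<open>\<alpha> = 0\<close> this is bounded continuous functions).\<close>
definition holder_on :: "real \<Rightarrow> 'a::metric_space set \<Rightarrow> ('a \<Rightarrow> real) \<Rightarrow> bool" where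
  "holder_on \<alpha> S w \<longleftrightarrow> continuous_on S w \<and> bounded (w ` S) \<and> (\<exists>L. holder_const \<alpha> L S w)"

definition C2_with :: "('a::euclidean_space \<Rightarrow> real) \<Rightarrow> ('a \<Rightarrow> 'a) \<Rightarrow> ('a \<Rightarrow> 'a \<Rightarrow>\<^sub>L 'a) \<Rightarrow> bool" where
  "C2_with \<phi> D H \<longleftrightarrow>
     (\<forall>x. (\<phi> has_derivative (\<lambda>v. D x \<bullet> v)) (at x)) \<and>
     (\<forall>x. (D has_derivative blinfun_apply (H x)) (at x)) \<and>
     continuous_on UNIV H"

definition eigenvalues :: "('a::euclidean_space \<Rightarrow>\<^sub>L 'a) \<Rightarrow> real set" where
  "eigenvalues A = {c. \<exists>v. v \<noteq> 0 \<and> blinfun_apply A v = c *\<^sub>R v}"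

definition lambda_max :: "('a::euclidean_space \<Rightarrow>\<^sub>L 'a) \<Rightarrow> real" where
  "lambda_max A = Max (eigenvalues A)"

definition lambda_min :: "('a::euclidean_space \<Rightarrow>\<^sub>L 'a) \<Rightarrow> real" where
  "lambda_min A = Min (eigenvalues A)"

definition inf_lap_plus :: "'a::euclidean_space \<Rightarrow> ('a \<Rightarrow>\<^sub>L 'a) \<Rightarrow> real" where
  "inf_lap_plus p A = (if p \<noteq> 0 then (p \<bullet> blinfun_apply A p) / (norm p)\<^sup>2 else lambda_max A)"

definition inf_lap_minus :: "'a::euclidean_space \<Rightarrow> ('a \<Rightarrow>\<^sub>L 'a) \<Rightarrow> real" where
  "inf_lap_minus p A = (if p \<noteq> 0 then (p \<bullet> blinfun_apply A p) / (norm p)\<^sup>2 else lambda_min A)"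

definition viscosity_solution ::
  "'a::euclidean_space set \<Rightarrow> ('a \<Rightarrow> real) \<Rightarrow> ('a \<Rightarrow> real) \<Rightarrow> ('a \<Rightarrow> real) \<Rightarrow> bool" where
  "viscosity_solution \<Omega> f g u \<longleftrightarrow>
     continuous_on (closure \<Omega>) u \<and> (\<forall>x\<in>frontier \<Omega>. u x = g x) \<and>
     (\<forall>x0\<in>\<Omega>. \<forall>\<phi> D H. C2_with \<phi> D H \<longrightarrow>
        ((\<exists>r>0. \<forall>x\<in>ball x0 r \<inter> \<Omega>. u x - \<phi> x \<le> u x0 - \<phi> x0) \<longrightarrow>
            - inf_lap_plus (D x0) (H x0) \<le> f x0) \<and>
        ((\<exists>r>0. \<forall>x\<in>ball x0 r \<inter> \<Omega>. u x - \<phi> x \<ge> u x0 - \<phi> x0) \<longrightarrow>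
            - inf_lap_minus (D x0) (H x0) \<ge> f x0))"

definition mesh :: "'a::euclidean_space set set \<Rightarrow> bool" where
  "mesh \<T> \<longleftrightarrow> finite \<T> \<and> \<T> \<noteq> {} \<and> (\<forall>T\<in>\<T>. int DIM('a) simplex T) \<and>
     (\<forall>T\<in>\<T>. \<forall>T'\<in>\<T>. (T \<inter> T') face_of T \<and> (T \<inter> T') face_of T')"

definition mesh_size :: "'a::euclidean_space set set \<Rightarrow> real" where
  "mesh_size \<T> = Max (diameter ` \<T>)"

definition quasiuniform :: "real \<Rightarrow> 'a::euclidean_space set set \<Rightarrow> bool" where
  "quasiuniform \<sigma> \<T> \<longleftrightarrow> (\<forall>T\<in>\<T>. (\<exists>x. ball x (diameter T / \<sigma>) \<subseteq> T) \<and>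
      mesh_size \<T> \<le> \<sigma> * diameter T)"

definition mesh_domain :: "'a::euclidean_space set set \<Rightarrow> 'a set" where
  "mesh_domain \<T> = interior (\<Union>\<T>)"

definition nodes :: "'a::euclidean_space set set \<Rightarrow> 'a set" where
  "nodes \<T> = {z. \<exists>T\<in>\<T>. z extreme_point_of T}"

text \<open>Continuous piecewise linear functions (values outside the mesh are irrelevant).\<close>
definition Vh :: "'a::euclidean_space set set \<Rightarrow> ('a \<Rightarrow> real) set" where
  "Vh \<T> = {w. \<forall>T\<in>\<T>. \<exists>a b. \<forall>x\<in>T. w x = a \<bullet> x + b}"

definition lagrange_interp :: "'a::euclidean_space set set \<Rightarrow> ('a \<Rightarrow> real) \<Rightarrow> 'a \<Rightarrow> real" where
  "lagrange_interp \<T> w = (THE v. v \<in> Vh \<T> \<and> (\<forall>z\<in>nodes \<T>. v z = w z) \<and>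
                                  (\<forall>x. x \<notin> \<Union>\<T> \<longrightarrow> v x = 0))"

definition direction_set :: "real \<Rightarrow> 'a::euclidean_space set \<Rightarrow> bool" where
  "direction_set \<theta> S \<longleftrightarrow> finite S \<and> S \<subseteq> sphere 0 1 \<and> (\<forall>v\<in>S. - v \<in> S) \<and>
     (\<forall>v. norm v = 1 \<longrightarrow> (\<exists>w\<in>S. norm (v - w) \<le> \<theta>))"

definition stencil :: "real \<Rightarrow> 'a::euclidean_space set \<Rightarrow> 'a \<Rightarrow> 'a set" where
  "stencil \<epsilon> S z = insert z ((\<lambda>v. z + \<epsilon> *\<^sub>R v) ` S)"

definition neg_disc_inf_lap :: "'a::euclidean_space set set \<Rightarrow> real \<Rightarrow> 'a set \<Rightarrow> ('a \<Rightarrow> real) \<Rightarrow> 'a \<Rightarrow> real" where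
  "neg_disc_inf_lap \<T> \<epsilon> S w z =
     (2 * w z - Max (lagrange_interp \<T> w ` stencil \<epsilon> S z)
              - Min (lagrange_interp \<T> w ` stencil \<epsilon> S z)) / \<epsilon>\<^sup>2"

definition interior_nodes :: "'a::euclidean_space set \<Rightarrow> 'a set set \<Rightarrow> real \<Rightarrow> 'a set" where
  "interior_nodes \<Omega> \<T> \<epsilon> = nodes \<T> \<inter> inner_set \<Omega> (2 * \<epsilon>)"

definition boundary_nodes :: "'a::euclidean_space set \<Rightarrow> 'a set set \<Rightarrow> real \<Rightarrow> 'a set" where
  "boundary_nodes \<Omega> \<T> \<epsilon> = nodes \<T> - interior_nodes \<Omega> \<T> \<epsilon>"

definition discrete_solution ::
  "'a::euclidean_space set \<Rightarrow> 'a set set \<Rightarrow> real \<Rightarrow> 'a set \<Rightarrow> ('a \<Rightarrow> real) \<Rightarrow> ('a \<Rightarrow> real)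
     \<Rightarrow> ('a \<Rightarrow> real) \<Rightarrow> bool" where
  "discrete_solution \<Omega> \<T> \<epsilon> S f g\<^sub>\<epsilon> uh \<longleftrightarrow> uh \<in> Vh \<T> \<and>
     (\<forall>z\<in>interior_nodes \<Omega> \<T> \<epsilon>. neg_disc_inf_lap \<T> \<epsilon> S uh z = f z) \<and>
     (\<forall>z\<in>boundary_nodes \<Omega> \<T> \<epsilon>. uh z = g\<^sub>\<epsilon> z)"

end

theory Submission
  imports Defs
begin
definition Qf :: "'a::euclidean_space \<Rightarrow> 'a \<Rightarrow> real \<Rightarrow> real \<Rightarrow> 'a \<Rightarrow> 'a \<Rightarrow> real" where
  "Qf x0 b al be e v = b \<bullet> (v - x0) + al * ((v - x0) \<bullet> (v - x0)) + be * (e \<bullet> (v - x0))\<^sup>2"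

definition QD :: "'a::euclidean_space \<Rightarrow> 'a \<Rightarrow> real \<Rightarrow> real \<Rightarrow> 'a \<Rightarrow> 'a \<Rightarrow> 'a" where
  "QD x0 b al be e v = b + (2*al) *\<^sub>R (v - x0) + (2*be*(e \<bullet> (v - x0))) *\<^sub>R e"

definition QH :: "real \<Rightarrow> real \<Rightarrow> 'a::euclidean_space \<Rightarrow> 'a \<Rightarrow>\<^sub>L 'a" where
  "QH al be e = Blinfun (\<lambda>w. (2*al) *\<^sub>R w + (2*be*(e \<bullet> w)) *\<^sub>R e)"

lemma QH_apply: "blinfun_apply (QH al be e) w = (2*al) *\<^sub>R w + (2*be*(e \<bullet> w)) *\<^sub>R e"
proof -
  have "bounded_linear (\<lambda>w::'a. (2*al) *\<^sub>R w + (2*be*(e \<bullet> w)) *\<^sub>R e)"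
    by (auto intro!: bounded_linear_intros)
  then show ?thesis unfolding QH_def by (simp add: bounded_linear_Blinfun_apply)
qed

lemma Q_C2: "C2_with (\<lambda>v. c + Qf x0 b al be e v) (QD x0 b al be e) (\<lambda>_. QH al be e)"
  unfolding C2_with_def
proof (intro conjI allI)
  fix x :: 'a
  show "((\<lambda>v. c + Qf x0 b al be e v) has_derivative (\<lambda>v. QD x0 b al be e x \<bullet> v)) (at x)"
    unfolding Qf_def QD_def
    apply (rule derivative_eq_intros refl | simp)+
    apply (simp add: algebra_simps inner_add_left inner_commute power2_eq_square)
    done
  show "(QD x0 b al be e has_derivative blinfun_apply (QH al be e)) (at x)"
    unfolding QD_def QH_apply
    apply (rule derivative_eq_intros refl | simp)+
    done
qed simp

lemma Qf_x0[simp]: "Qf x0 b al be e x0 = 0"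
  by (simp add: Qf_def)

lemma Qf_neg: "Qf x0 (-b) (-al) (-be) e v = - Qf x0 b al be e v"
  by (simp add: Qf_def)

lemma QD_x0[simp]: "QD x0 b al be e x0 = b"
  by (simp add: QD_def)

lemma eigenvalues_scalar: "eigenvalues (QH al 0 e) = {2*al}"
proof -
  obtain w :: 'a where w: "w \<noteq> 0" using nonzero_Basis SOME_Basis by blast
  show ?thesis unfolding eigenvalues_def QH_apply
  proof (intro set_eqI iffI)
    fix c assume "c \<in> {c. \<exists>v. v \<noteq> 0 \<and> (2 * al) *\<^sub>R v + (2 * 0 * (e \<bullet> v)) *\<^sub>R e = c *\<^sub>R v}"
    then obtain v :: 'a where "v \<noteq> 0" "(2 * al) *\<^sub>R v = c *\<^sub>R v" by auto
    then show "c \<in> {2*al}" by (metis scaleR_cancel_right singletonI)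
  next
    fix c assume "c \<in> {2*al}"
    then show "c \<in> {c. \<exists>v. v \<noteq> 0 \<and> (2 * al) *\<^sub>R v + (2 * 0 * (e \<bullet> v)) *\<^sub>R e = c *\<^sub>R v}"
      using w by auto
  qed
qed

lemma QH_quad: "b \<bullet> blinfun_apply (QH al be e) b = 2*al*(norm b)\<^sup>2 + 2*be*(e \<bullet> b)\<^sup>2"
  by (simp add: QH_apply inner_add_right power2_eq_square inner_commute flip: power2_norm_eq_inner)

definition qsub :: "'a::euclidean_space set \<Rightarrow> ('a \<Rightarrow> real) \<Rightarrow> ('a \<Rightarrow> real) \<Rightarrow> bool" where
  "qsub \<Omega> u f \<longleftrightarrow> (\<forall>x0\<in>\<Omega>. \<forall>b al be e r. r > 0 \<and> (\<forall>x\<in>ball x0 r \<inter> \<Omega>. u x - Qf x0 b al be e x \<le> u x0) \<longrightarrow>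
     ((b \<noteq> 0 \<longrightarrow> -(2*al + 2*be*(e \<bullet> b)\<^sup>2/(norm b)\<^sup>2) \<le> f x0) \<and> (be = 0 \<longrightarrow> -(2*al) \<le> f x0)))"

lemma visc_qsub:
  assumes "viscosity_solution \<Omega> f g u"
  shows "qsub \<Omega> u f"
  unfolding qsub_def
proof (intro ballI allI impI, elim conjE)
  fix x0 b al be e r
  assume x0: "x0 \<in> \<Omega>" and r: "0 < r" and mx: "\<forall>x\<in>ball x0 r \<inter> \<Omega>. u x - Qf x0 b al be e x \<le> u x0"
  have C2: "C2_with (\<lambda>v. 0 + Qf x0 b al be e v) (QD x0 b al be e) (\<lambda>_. QH al be e)" by (rule Q_C2)
  have "\<exists>r>0. \<forall>x\<in>ball x0 r \<inter> \<Omega>. u x - (0 + Qf x0 b al be e x) \<le> u x0 - (0 + Qf x0 b al be e x0)"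
    using r mx by auto
  with assms x0 C2 have main: "- inf_lap_plus b (QH al be e) \<le> f x0"
    unfolding viscosity_solution_def by fastforce
  have A: "b \<noteq> 0 \<Longrightarrow> inf_lap_plus b (QH al be e) = 2*al + 2*be*(e \<bullet> b)\<^sup>2/(norm b)\<^sup>2"
    by (simp add: inf_lap_plus_def QH_quad add_divide_distrib)
  show "(b \<noteq> 0 \<longrightarrow> -(2*al + 2*be*(e \<bullet> b)\<^sup>2/(norm b)\<^sup>2) \<le> f x0) \<and> (be = 0 \<longrightarrow> -(2*al) \<le> f x0)"
  proof (intro conjI impI)
    assume "b \<noteq> 0" then show "-(2*al + 2*be*(e \<bullet> b)\<^sup>2/(norm b)\<^sup>2) \<le> f x0" using A main by simp
  next
    assume be: "be = 0"
    show "-(2*al) \<le> f x0"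
    proof (cases "b = 0")
      case True
      then have "inf_lap_plus b (QH al be e) = 2*al"
        using be by (simp add: inf_lap_plus_def lambda_max_def eigenvalues_scalar)
      then show ?thesis using main by simp
    next
      case False then show ?thesis using A main be by simp
    qed
  qed
qed

lemma visc_qsub_neg:
  assumes "viscosity_solution \<Omega> f g u"
  shows "qsub \<Omega> (\<lambda>x. - u x) (\<lambda>x. - f x)"
  unfolding qsub_def
proof (intro ballI allI impI, elim conjE)
  fix x0 b al be e r
  assume x0: "x0 \<in> \<Omega>" and r: "0 < r" and mx: "\<forall>x\<in>ball x0 r \<inter> \<Omega>. - u x - Qf x0 b al be e x \<le> - u x0"
  have C2: "C2_with (\<lambda>v. 0 + Qf x0 (-b) (-al) (-be) e v) (QD x0 (-b) (-al) (-be) e) (\<lambda>_. QH (-al) (-be) e)"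
    by (rule Q_C2)
  have "\<exists>r>0. \<forall>x\<in>ball x0 r \<inter> \<Omega>. u x - (0 + Qf x0 (-b) (-al) (-be) e x) \<ge> u x0 - (0 + Qf x0 (-b) (-al) (-be) e x0)"
  proof (intro exI[of _ r] conjI ballI)
    fix x assume "x \<in> ball x0 r \<inter> \<Omega>"
    then show "u x - (0 + Qf x0 (-b) (-al) (-be) e x) \<ge> u x0 - (0 + Qf x0 (-b) (-al) (-be) e x0)"
    proof -
      from mx \<open>x \<in> ball x0 r \<inter> \<Omega>\<close> have "- u x - Qf x0 b al be e x \<le> - u x0" by blast
      then show ?thesis by (simp add: Qf_neg)
    qed
  qed (rule r)
  with assms x0 C2 have main: "- inf_lap_minus (-b) (QH (-al) (-be) e) \<ge> f x0"
    unfolding viscosity_solution_def by fastforce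
  have A: "b \<noteq> 0 \<Longrightarrow> inf_lap_minus (-b) (QH (-al) (-be) e) = -(2*al + 2*be*(e \<bullet> b)\<^sup>2/(norm b)\<^sup>2)"
  proof -
    assume "b \<noteq> 0"
    have "(-b) \<bullet> blinfun_apply (QH (-al) (-be) e) (-b) = 2*(-al)*(norm (-b))\<^sup>2 + 2*(-be)*(e \<bullet> (-b))\<^sup>2"
      by (rule QH_quad)
    then show ?thesis using \<open>b \<noteq> 0\<close> by (simp add: inf_lap_minus_def diff_divide_distrib)
  qed
  show "(b \<noteq> 0 \<longrightarrow> -(2*al + 2*be*(e \<bullet> b)\<^sup>2/(norm b)\<^sup>2) \<le> - f x0) \<and> (be = 0 \<longrightarrow> -(2*al) \<le> - f x0)"
  proof (intro conjI impI)
    assume "b \<noteq> 0" then show "-(2*al + 2*be*(e \<bullet> b)\<^sup>2/(norm b)\<^sup>2) \<le> - f x0" using A main by simp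
  next
    assume be: "be = 0"
    show "-(2*al) \<le> - f x0"
    proof (cases "b = 0")
      case True
      have "eigenvalues (QH (-al) 0 e) = {2*(-al)}" by (rule eigenvalues_scalar)
      then have "inf_lap_minus (-b) (QH (-al) (-be) e) = -2*al"
        using be True by (simp add: inf_lap_minus_def lambda_min_def)
      then show ?thesis using main by simp
    next
      case False then show ?thesis using A main be by simp
    qed
  qed
qed

lemma norm_quad_bound:
  fixes eh d :: "'a::euclidean_space"
  assumes r0: "r0 > 0" and eh: "norm eh = 1" and d: "norm d < r0/2"
  shows "norm (r0 *\<^sub>R eh + d) \<le> r0 + eh \<bullet> d + (d \<bullet> d - (eh \<bullet> d)\<^sup>2)/r0"
proof -
  define t where "t = eh \<bullet> d"
  define s where "s = d \<bullet> d - t\<^sup>2"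
  have tb: "\<bar>t\<bar> \<le> norm d" unfolding t_def using Cauchy_Schwarz_ineq2[of eh d] eh by simp
  have dd: "d \<bullet> d = (norm d)\<^sup>2" by (simp add: power2_norm_eq_inner)
  have s0: "s \<ge> 0" unfolding s_def dd using tb
    by (metis abs_ge_zero abs_norm_cancel diff_ge_0_iff_ge power2_abs power_mono)
  have tpos: "r0 + t > r0/2" using tb d by linarith
  have N2: "(norm (r0 *\<^sub>R eh + d))\<^sup>2 = (r0 + t)\<^sup>2 + s"
  proof -
    have ee: "eh \<bullet> eh = 1" using eh by (simp add: norm_eq_1)
    have "(norm (r0 *\<^sub>R eh + d))\<^sup>2 = (r0 *\<^sub>R eh + d) \<bullet> (r0 *\<^sub>R eh + d)" by (simp add: power2_norm_eq_inner)
    also have "\<dots> = r0*r0*(eh \<bullet> eh) + 2*r0*(eh \<bullet> d) + d \<bullet> d"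
      by (simp add: inner_add_left inner_add_right inner_commute algebra_simps)
    finally show ?thesis unfolding s_def t_def ee by (simp add: power2_eq_square algebra_simps)
  qed
  define X where "X = r0 + t + s/r0"
  have X0: "X \<ge> 0" unfolding X_def using tpos s0 r0 by (simp add: add_nonneg_nonneg) 
  have "s/r0 * (2*(r0+t)) \<ge> s/r0 * r0"
    using s0 r0 tpos by (intro mult_left_mono) auto
  moreover have "X\<^sup>2 = (r0+t)\<^sup>2 + s/r0 * (2*(r0+t)) + (s/r0)\<^sup>2"
    unfolding X_def using r0 by (simp add: power2_eq_square field_simps)
  moreover have "s/r0 * r0 = s" using r0 by simp
  ultimately have "X\<^sup>2 \<ge> (r0 + t)\<^sup>2 + s"
    by (smt (verit) zero_le_power2)
  then have "(norm (r0 *\<^sub>R eh + d))\<^sup>2 \<le> X\<^sup>2" using N2 by simp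
  then have "norm (r0 *\<^sub>R eh + d) \<le> X" using X0 by (rule power2_le_imp_le)
  then show ?thesis unfolding X_def s_def t_def .
qed

lemma cone_cmp:
  fixes u f :: "'a::euclidean_space \<Rightarrow> real"
  assumes qs: "qsub \<Omega> u f" and sub: "cball x R \<subseteq> \<Omega>" and R: "R > 0"
    and cont: "continuous_on (cball x R) u"
    and a0: "a \<ge> 0" and ak: "\<And>r. 0 < r \<Longrightarrow> r < R \<Longrightarrow> k*r < a"
    and fk: "\<And>y. y \<in> ball x R \<Longrightarrow> f y < k"
    and bd: "\<And>v. dist x v = R \<Longrightarrow> u v \<le> u x + a*R - k*R\<^sup>2/2"
    and v: "v \<in> cball x R"
  shows "u v \<le> u x + a * dist x v - k*(dist x v)\<^sup>2/2"
proof (rule ccontr)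
  assume neg: "\<not> ?thesis"
  define phi where "phi y = u x + a * dist x y - k*(dist x y)\<^sup>2/2" for y
  define F where "F y = u y - phi y" for y
  have contF: "continuous_on (cball x R) F"
    unfolding F_def phi_def
    by (intro continuous_intros cont) auto
  obtain x0 where x0: "x0 \<in> cball x R" and x0max: "\<And>y. y \<in> cball x R \<Longrightarrow> F y \<le> F x0"
    using continuous_attains_sup[OF compact_cball _ contF] v by blast
  have Fv: "F v > 0" using neg unfolding F_def phi_def by simp
  then have Fx0: "F x0 > 0" using x0max[OF v] by simp
  have "F x = 0" unfolding F_def phi_def by simp
  then have "x0 \<noteq> x" using Fx0 by auto
  define r0 where "r0 = dist x x0"
  have r0pos: "r0 > 0" unfolding r0_def using \<open>x0 \<noteq> x\<close> by simp
  have "r0 \<noteq> R"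
  proof
    assume "r0 = R"
    then have "u x0 \<le> u x + a*R - k*R\<^sup>2/2" using bd r0_def by blast
    then show False using Fx0 \<open>r0 = R\<close> unfolding F_def phi_def r0_def by simp
  qed
  then have r0R: "r0 < R" using x0 unfolding r0_def by simp
  define eh where "eh = (1/r0) *\<^sub>R (x0 - x)"
  have eh1: "norm eh = 1" unfolding eh_def r0_def using r0pos r0_def
    by (simp add: dist_norm norm_minus_commute)
  have x0eq: "x0 - x = r0 *\<^sub>R eh" unfolding eh_def using r0pos by simp
  define rr where "rr = min (r0/2) (R - r0)"
  have rr: "rr > 0" unfolding rr_def using r0pos r0R by simp
  define b where "b = (a - k*r0) *\<^sub>R eh"
  define al where "al = a/r0 - k/2"
  define be where "be = - a/r0"
  have x0O: "x0 \<in> \<Omega>" using x0 sub by blast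
  have key: "phi y \<le> phi x0 + Qf x0 b al be eh y" if y: "y \<in> ball x0 rr" for y
  proof -
    define d where "d = y - x0"
    have nd: "norm d < r0/2" using y unfolding d_def rr_def by (simp add: dist_norm norm_minus_commute)
    have yx: "y - x = r0 *\<^sub>R eh + d" unfolding d_def using x0eq by (simp add: algebra_simps)
    define N where "N = norm (r0 *\<^sub>R eh + d)"
    have distN: "dist x y = N" unfolding N_def by (metis dist_commute dist_norm yx)
    have Nb: "N \<le> r0 + eh \<bullet> d + (d \<bullet> d - (eh \<bullet> d)\<^sup>2)/r0"
      unfolding N_def by (rule norm_quad_bound[OF r0pos eh1 nd])
    have ee: "eh \<bullet> eh = 1" using eh1 by (simp add: norm_eq_1)
    have N2: "N\<^sup>2 = r0\<^sup>2 + 2*r0*(eh \<bullet> d) + d \<bullet> d"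
    proof -
      have "N\<^sup>2 = (r0 *\<^sub>R eh + d) \<bullet> (r0 *\<^sub>R eh + d)" unfolding N_def by (simp add: power2_norm_eq_inner)
      also have "\<dots> = r0*r0*(eh \<bullet> eh) + 2*r0*(eh \<bullet> d) + d \<bullet> d"
        by (simp add: inner_add_left inner_add_right inner_commute algebra_simps)
      finally show ?thesis using ee by (simp add: power2_eq_square)
    qed
    have Q: "Qf x0 b al be eh y = (a - k*r0)*(eh \<bullet> d) + (a/r0 - k/2)*(d \<bullet> d) - (a/r0)*(eh \<bullet> d)\<^sup>2"
      unfolding Qf_def b_def al_def be_def d_def by simp
    have "a * N \<le> a * (r0 + eh \<bullet> d + (d \<bullet> d - (eh \<bullet> d)\<^sup>2)/r0)"
      using Nb a0 by (rule mult_left_mono)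
    then have "a * N \<le> a*r0 + a*(eh \<bullet> d) + (a/r0)*(d \<bullet> d) - (a/r0)*(eh \<bullet> d)\<^sup>2"
      by (simp add: algebra_simps diff_divide_distrib)
    moreover have "phi y = u x + a*N - k*N\<^sup>2/2" unfolding phi_def distN ..
    moreover have "phi x0 = u x + a*r0 - k*r0\<^sup>2/2" unfolding phi_def r0_def ..
    moreover have "k*N\<^sup>2/2 = k*r0\<^sup>2/2 + k*r0*(eh \<bullet> d) + k*(d \<bullet> d)/2"
      unfolding N2 by (simp add: algebra_simps add_divide_distrib)
    ultimately show ?thesis unfolding Q by (simp add: algebra_simps)
  qed
  have lm: "\<forall>y\<in>ball x0 rr \<inter> \<Omega>. u y - Qf x0 b al be eh y \<le> u x0"
  proof
    fix y assume "y \<in> ball x0 rr \<inter> \<Omega>"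
    then have y: "y \<in> ball x0 rr" by blast
    have "dist x y \<le> dist x x0 + dist x0 y" by (rule dist_triangle)
    then have "y \<in> cball x R" using y unfolding rr_def r0_def by simp
    then have "F y \<le> F x0" by (rule x0max)
    then show "u y - Qf x0 b al be eh y \<le> u x0" using key[OF y] unfolding F_def by simp
  qed
  have bne: "b \<noteq> 0" unfolding b_def using ak[OF r0pos r0R] eh1 by auto
  have "-(2*al + 2*be*(eh \<bullet> b)\<^sup>2/(norm b)\<^sup>2) \<le> f x0"
    using qs x0O rr lm bne unfolding qsub_def by blast
  moreover have "(eh \<bullet> b)\<^sup>2 = (norm b)\<^sup>2"
  proof -
    have "(eh \<bullet> b)\<^sup>2 = (a - k*r0)\<^sup>2" unfolding b_def using eh1 by (simp add: norm_eq_1)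
    moreover have "(norm b)\<^sup>2 = (a - k*r0)\<^sup>2" unfolding b_def using eh1 by (simp add: power2_abs)
    ultimately show ?thesis by simp
  qed
  ultimately have "k \<le> f x0" unfolding al_def be_def using bne by simp
  moreover have "x0 \<in> ball x R" using r0R unfolding r0_def by simp
  ultimately show False using fk by fastforce
qed

lemma inner_sq_add: "(p + q) \<bullet> (p + q) = p \<bullet> p + 2 * (p \<bullet> q) + q \<bullet> (q::'a::real_inner)"
  by (simp add: inner_add_left inner_add_right inner_commute)

lemma growth_lb:
  fixes u f :: "'a::euclidean_space \<Rightarrow> real"
  assumes qs: "qsub \<Omega> u f" and sub: "cball z0 (2*es) \<subseteq> \<Omega>" and ep: "es > 0"
    and cont: "continuous_on (cball z0 (2*es)) u"
    and pS: "pS \<in> cball z0 (2*es)" "\<And>y. y \<in> cball z0 (2*es) \<Longrightarrow> u y \<le> u pS"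
    and fk: "\<And>y. y \<in> ball z0 (2*es) \<Longrightarrow> f y < k"
  shows "u pS - u z0 > - 2*k*es\<^sup>2"
proof (rule ccontr)
  define G where "G = u pS - u z0"
  assume "\<not> u pS - u z0 > - 2*k*es\<^sup>2"
  then have Gle: "G \<le> -2*k*es\<^sup>2" unfolding G_def by simp
  have G0: "G \<ge> 0" unfolding G_def using pS(2)[of z0] ep by simp
  define c where "c = G/(4*es\<^sup>2)"
  have c0: "c \<ge> 0" unfolding c_def using G0 by simp
  have c4: "c * (4*es\<^sup>2) = G" unfolding c_def using ep by simp
  define F where "F y = u y - c * (dist z0 y)\<^sup>2" for y
  have contF: "continuous_on (cball z0 (2*es)) F" unfolding F_def
    by (intro continuous_intros cont)
  obtain x0 where x0: "x0 \<in> cball z0 (2*es)" and x0max: "\<And>y. y \<in> cball z0 (2*es) \<Longrightarrow> F y \<le> F x0"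
    using continuous_attains_sup[OF compact_cball _ contF] ep by fastforce
  define x1 where "x1 = (if dist z0 x0 < 2*es then x0 else z0)"
  have x1in: "dist z0 x1 < 2*es" unfolding x1_def using ep by auto
  have x1max: "\<And>y. y \<in> cball z0 (2*es) \<Longrightarrow> F y \<le> F x1"
  proof -
    fix y assume y: "y \<in> cball z0 (2*es)"
    show "F y \<le> F x1"
    proof (cases "dist z0 x0 < 2*es")
      case True then show ?thesis using x0max[OF y] unfolding x1_def by simp
    next
      case False
      then have "dist z0 x0 = 2*es" using x0 by simp
      then have "F x0 = u x0 - G" unfolding F_def using c4 by (simp add: power2_eq_square algebra_simps)
      also have "\<dots> \<le> u z0" using pS(2)[OF x0] unfolding G_def by simp
      also have "\<dots> = F z0" unfolding F_def by simp
      finally show ?thesis using x0max[OF y] False unfolding x1_def by simp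
    qed
  qed
  define rr where "rr = 2*es - dist z0 x1"
  have rr: "rr > 0" unfolding rr_def using x1in by simp
  have x1O: "x1 \<in> \<Omega>" using x1in sub by auto
  define b where "b = (2*c) *\<^sub>R (x1 - z0)"
  have lm: "\<forall>y\<in>ball x1 rr \<inter> \<Omega>. u y - Qf x1 b c 0 z0 y \<le> u x1"
  proof
    fix y assume "y \<in> ball x1 rr \<inter> \<Omega>"
    then have y: "dist x1 y < rr" by simp
    have "dist z0 y \<le> dist z0 x1 + dist x1 y" by (rule dist_triangle)
    then have "y \<in> cball z0 (2*es)" using y unfolding rr_def by simp
    then have Fy: "F y \<le> F x1" by (rule x1max)
    have "(dist z0 y)\<^sup>2 - (dist z0 x1)\<^sup>2 = 2 * ((x1 - z0) \<bullet> (y - x1)) + (y - x1) \<bullet> (y - x1)"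
    proof -
      have "y - z0 = (x1 - z0) + (y - x1)" by simp
      then have "(dist z0 y)\<^sup>2 = ((x1 - z0) + (y - x1)) \<bullet> ((x1 - z0) + (y - x1))"
        by (metis dist_commute dist_norm power2_norm_eq_inner)
      also have "\<dots> = (x1 - z0) \<bullet> (x1 - z0) + 2 * ((x1 - z0) \<bullet> (y - x1)) + (y - x1) \<bullet> (y - x1)"
        by (rule inner_sq_add)
      finally show ?thesis by (simp add: dist_norm power2_norm_eq_inner norm_minus_commute[of z0 x1])
    qed
    then have "c * (dist z0 y)\<^sup>2 - c * (dist z0 x1)\<^sup>2 = c * (2 * ((x1 - z0) \<bullet> (y - x1)) + (y - x1) \<bullet> (y - x1))"
      by (simp add: right_diff_distrib[symmetric])
    also have "\<dots> = Qf x1 b c 0 z0 y"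
      unfolding Qf_def b_def by (simp add: distrib_left)
    finally have "c * (dist z0 y)\<^sup>2 - c * (dist z0 x1)\<^sup>2 = Qf x1 b c 0 z0 y" .
    then show "u y - Qf x1 b c 0 z0 y \<le> u x1" using Fy unfolding F_def by simp
  qed
  have "-(2*c) \<le> f x1" using qs x1O rr lm unfolding qsub_def by blast
  moreover have "f x1 < k" using fk x1in by simp
  ultimately have "-k < 2*c" by simp
  moreover have "2*es\<^sup>2 > 0" using ep by simp
  ultimately have "(-k) * (2*es\<^sup>2) < (2*c) * (2*es\<^sup>2)" by (rule mult_strict_right_mono)
  then have "-2*k*es\<^sup>2 < G" using c4 by (simp add: algebra_simps)
  then show False using Gle by simp
qed

lemma lin_helper: "(x::real) \<le> y + A - K/2 \<Longrightarrow> A = (z - y)/2 + K \<Longrightarrow> 2*x - z - y \<le> K"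
  by (simp add: field_simps)

lemma sc_ineq:
  fixes u f :: "'a::euclidean_space \<Rightarrow> real"
  assumes qs: "qsub \<Omega> u f" and sub: "cball z0 (2*es) \<subseteq> \<Omega>" and ep: "es > 0"
    and cont: "continuous_on (cball z0 (2*es)) u"
    and pS: "pS \<in> cball z0 (2*es)" "\<And>y. y \<in> cball z0 (2*es) \<Longrightarrow> u y \<le> u pS"
    and fk: "\<And>y. y \<in> ball z0 (2*es) \<Longrightarrow> f y < k"
    and q: "q \<in> cball z0 es"
  shows "2 * u q - u pS - u z0 \<le> k * es\<^sup>2"
proof -
  define G where "G = u pS - u z0"
  have G0: "G \<ge> 0" unfolding G_def using pS(2)[of z0] ep by simp
  have Gk: "G > -2*k*es\<^sup>2" unfolding G_def by (rule growth_lb[OF qs sub ep cont pS fk])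
  define a where "a = G/(2*es) + k*es"
  have a2: "a * (2*es) = G + 2*k*es\<^sup>2" unfolding a_def using ep by (simp add: field_simps power2_eq_square)
  have apos: "a > 0"
  proof -
    have "a * (2*es) > 0" using a2 Gk by simp
    then show ?thesis using ep by (simp add: zero_less_mult_iff)
  qed
  have ake: "a \<ge> k*es" unfolding a_def using G0 ep by simp
  define R where "R = (if a \<ge> 2*k*es then 2*es else a/k)"
  have kpos2: "\<not> a \<ge> 2*k*es \<Longrightarrow> k > 0"
    using apos ep by (smt (verit) mult_nonneg_nonneg mult_nonpos_nonneg)
  have Rge: "R \<ge> es"
  proof (cases "a \<ge> 2*k*es")
    case True then show ?thesis unfolding R_def using ep by simp
  next
    case False then have "k > 0" by (rule kpos2)
    then show ?thesis unfolding R_def using False ake by (simp add: pos_le_divide_eq mult.commute)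
  qed
  have Rle: "R \<le> 2*es"
  proof (cases "a \<ge> 2*k*es")
    case True then show ?thesis unfolding R_def by simp
  next
    case False then have "k > 0" by (rule kpos2)
    then show ?thesis unfolding R_def using False by (simp add: pos_divide_le_eq algebra_simps)
  qed
  have Rpos: "R > 0" using Rge ep by simp
  have sub2: "cball z0 R \<subseteq> cball z0 (2*es)" using Rle by auto
  have ak: "k*r < a" if "0 < r" "r < R" for r
  proof (cases "a \<ge> 2*k*es")
    case True
    show ?thesis
    proof (cases "k \<le> 0")
      case True then show ?thesis using that apos by (smt (verit) mult_nonpos_nonneg)
    next
      case False then have "k*r < k*(2*es)" using that Rle by simp
      then show ?thesis using True by simp
    qed
  next
    case False then have k: "k > 0" by (rule kpos2)
    then have "k*r < k*R" using that by simp
    also have "k*R = a" unfolding R_def using False k by simp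
    finally show ?thesis .
  qed
  have bd: "u v \<le> u z0 + a*R - k*R\<^sup>2/2" if "dist z0 v = R" for v
  proof -
    have "v \<in> cball z0 (2*es)" using that Rle by simp
    then have "u v \<le> u z0 + G" using pS(2) unfolding G_def by fastforce
    also have "G \<le> a*R - k*R\<^sup>2/2"
    proof (cases "a \<ge> 2*k*es")
      case True
      then show ?thesis unfolding R_def using a2 by (simp add: power2_eq_square algebra_simps)
    next
      case False then have k: "k > 0" by (rule kpos2)
      have "a*R - k*R\<^sup>2/2 = a\<^sup>2/(2*k)" unfolding R_def using False k by (simp add: power2_eq_square field_simps)
      moreover have "a\<^sup>2 - 2*k*G = (G/(2*es) - k*es)\<^sup>2" unfolding a_def using ep
        by (simp add: power2_eq_square field_simps)
      then have "a\<^sup>2 \<ge> 2*k*G" by (smt (verit) zero_le_power2)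
      ultimately show ?thesis using k by (simp add: pos_le_divide_eq mult.commute)
    qed
    finally show ?thesis by simp
  qed
  have qR: "q \<in> cball z0 R" using q Rge by auto
  have cone: "u q \<le> u z0 + a * dist z0 q - k*(dist z0 q)\<^sup>2/2"
    by (rule cone_cmp[OF qs _ Rpos _ _ ak _ bd qR])
       (use sub sub2 cont apos fk Rle in \<open>auto intro: continuous_on_subset\<close>)
  define t where "t = dist z0 q"
  have t: "0 \<le> t" "t \<le> es" unfolding t_def using q by auto
  have "a*t - k*t\<^sup>2/2 \<le> a*es - k*es\<^sup>2/2"
  proof -
    have "a - k*(es+t)/2 \<ge> 0"
    proof (cases "k \<le> 0")
      case True then show ?thesis using apos t ep by (smt (verit) divide_nonpos_pos mult_nonpos_nonneg)
    next
      case False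
      then have "k*(es+t)/2 \<le> k*es" using t by simp
      then show ?thesis using ake by simp
    qed
    then have "(es - t) * (a - k*(es+t)/2) \<ge> 0" using t by simp
    then show ?thesis by (simp add: power2_eq_square algebra_simps diff_divide_distrib)
  qed
  then have "u q \<le> u z0 + a*es - k*es\<^sup>2/2" using cone unfolding t_def by simp
  moreover have "a*es = G/2 + k*es\<^sup>2" using a2 by (simp add: power2_eq_square algebra_simps)
  ultimately show ?thesis unfolding G_def by (rule lin_helper)
qed

lemma hol_bound:
  fixes u :: "'a::metric_space \<Rightarrow> real"
  assumes "\<forall>x\<in>K. \<forall>y\<in>K. \<bar>u x - u y\<bar> \<le> L * dist x y powr al" "L \<ge> 0" "al \<ge> 0"
    "x \<in> K" "y \<in> K" "dist x y \<le> D"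
  shows "\<bar>u x - u y\<bar> \<le> L * D powr al"
proof -
  have "\<bar>u x - u y\<bar> \<le> L * dist x y powr al" using assms by blast
  also have "\<dots> \<le> L * D powr al"
    using assms by (intro mult_left_mono powr_mono2) auto
  finally show ?thesis .
qed

locale core =
  fixes \<Omega> :: "'a::euclidean_space set" and u :: "'a \<Rightarrow> real" and f :: "'a \<Rightarrow> real"
    and Lu Mu Lf al es :: real
  assumes contu: "continuous_on (closure \<Omega>) u"
    and holu: "\<forall>x\<in>closure \<Omega>. \<forall>y\<in>closure \<Omega>. \<bar>u x - u y\<bar> \<le> Lu * dist x y powr al"
    and Mu: "\<forall>x\<in>closure \<Omega>. \<bar>u x\<bar> \<le> Mu"
    and Lu0: "Lu \<ge> 0" and al0: "al \<ge> 0" and es0: "es > 0"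
begin

definition v :: "'a \<Rightarrow> real" where
  "v x = Sup (u ` (cball x es \<inter> closure \<Omega>))"

lemma v_attain:
  assumes "x \<in> closure \<Omega>"
  shows "\<exists>p\<in>cball x es \<inter> closure \<Omega>. v x = u p \<and> (\<forall>q\<in>cball x es \<inter> closure \<Omega>. u q \<le> u p)"
proof -
  have cpt: "compact (cball x es \<inter> closure \<Omega>)" by (intro compact_Int_closed) auto
  have "x \<in> cball x es \<inter> closure \<Omega>" using assms es0 by auto
  then have ne: "cball x es \<inter> closure \<Omega> \<noteq> {}" by blast
  have ct: "continuous_on (cball x es \<inter> closure \<Omega>) u" by (rule continuous_on_subset[OF contu]) auto
  obtain p where p: "p \<in> cball x es \<inter> closure \<Omega>" "\<And>q. q \<in> cball x es \<inter> closure \<Omega> \<Longrightarrow> u q \<le> u p"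
    using continuous_attains_sup[OF cpt ne ct] by blast
  have "v x = u p" unfolding v_def using p by (intro cSup_eq_maximum) auto
  then show ?thesis using p by blast
qed

lemma v_upper:
  assumes "x \<in> closure \<Omega>" "q \<in> cball x es" "q \<in> closure \<Omega>"
  shows "u q \<le> v x"
  using v_attain[OF assms(1)] assms by auto

lemma v_ge_u: "x \<in> closure \<Omega> \<Longrightarrow> u x \<le> v x"
  using v_upper[of x x] es0 by auto

lemma v_le_u: 
  assumes "x \<in> closure \<Omega>"
  shows "v x \<le> u x + Lu * es powr al"
proof -
  obtain p where p: "p \<in> cball x es \<inter> closure \<Omega>" "v x = u p"
    using v_attain[OF assms] by blast
  have "\<bar>u p - u x\<bar> \<le> Lu * es powr al"
    using p assms by (intro hol_bound[OF holu Lu0 al0]) (auto simp: dist_commute)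
  then show ?thesis using p by simp
qed

lemma v_bound: 
  assumes "x \<in> closure \<Omega>"
  shows "\<bar>v x\<bar> \<le> Mu"
proof -
  obtain p where p: "p \<in> cball x es \<inter> closure \<Omega>" "v x = u p"
    using v_attain[OF assms] by blast
  then show ?thesis using Mu by auto
qed

lemma v_shift:
  assumes x: "cball x es \<subseteq> \<Omega>" and z: "z \<in> closure \<Omega>" and h: "0 \<le> h" "h \<le> es" and d: "dist x z \<le> h"
  shows "v x \<le> v z + Lu * (2*h) powr al"
proof -
  have xO: "x \<in> closure \<Omega>" using x es0 closure_subset by fastforce
  obtain p where p: "p \<in> cball x es \<inter> closure \<Omega>" "v x = u p"
    using v_attain[OF xO] by blast
  define s where "s = (es - h)/es"
  have s: "0 \<le> s" "s \<le> 1" unfolding s_def using h es0 by auto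
  have s1: "(1 - s) * es = h" unfolding s_def using es0 by (simp add: field_simps)
  define p2 where "p2 = z + s *\<^sub>R (p - x)"
  have dpx: "dist x p \<le> es" using p by simp
  have "dist x p2 = norm ((z - x) + s *\<^sub>R (p - x))" unfolding p2_def dist_norm
    by (simp add: algebra_simps norm_minus_commute)
  also have "\<dots> \<le> norm (z - x) + s * norm (p - x)" using s by (simp add: norm_triangle_ineq[THEN order_trans])
  also have "\<dots> \<le> h + s * es"
    using d dpx s by (intro add_mono mult_left_mono) (auto simp: dist_norm norm_minus_commute)
  also have "\<dots> = es" using s1 by (simp add: algebra_simps)
  finally have p2x: "p2 \<in> cball x es" by simp
  then have p2O: "p2 \<in> closure \<Omega>" using x closure_subset by blast
  have "dist z p2 = s * norm (p - x)" unfolding p2_def dist_norm using s by simp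
  also have "\<dots> \<le> 1 * es" using s dpx by (intro mult_mono) (auto simp: dist_norm norm_minus_commute)
  finally have p2z: "p2 \<in> cball z es" by simp
  have up2: "u p2 \<le> v z" by (rule v_upper[OF z p2z p2O])
  have "dist p p2 = norm ((x - z) + (1 - s) *\<^sub>R (p - x))" unfolding p2_def dist_norm
    by (simp add: algebra_simps)
  also have "\<dots> \<le> norm (x - z) + (1 - s) * norm (p - x)" using s by (simp add: norm_triangle_ineq[THEN order_trans])
  also have "\<dots> \<le> h + (1 - s) * es"
    using d dpx s by (intro add_mono mult_left_mono) (auto simp: dist_norm norm_minus_commute)
  finally have "dist p p2 \<le> 2*h" using s1 by simp
  then have "\<bar>u p - u p2\<bar> \<le> Lu * (2*h) powr al"
    using p p2O by (intro hol_bound[OF holu Lu0 al0]) auto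
  then show ?thesis using p up2 by simp
qed

lemma stencil_max:
  assumes sub: "cball z (2*es) \<subseteq> \<Omega>" and dirs: "direction_set th Sd" and th: "th \<ge> 0"
    and pS: "pS \<in> cball z (2*es)"
  shows "\<exists>x\<in>stencil es Sd z. u pS \<le> v x + Lu*(2*es*th) powr al"
proof (cases "dist z pS \<le> es")
  case True
  have zO: "z \<in> closure \<Omega>" using sub es0 closure_subset by fastforce
  have "pS \<in> closure \<Omega>" using pS sub closure_subset by blast
  then have "u pS \<le> v z" using v_upper[OF zO] True by simp
  moreover have "0 \<le> Lu*(2*es*th) powr al" using Lu0 by simp
  ultimately show ?thesis unfolding stencil_def by force
next
  case False
  define rho where "rho = dist z pS"
  have rho: "es < rho" "rho \<le> 2*es" using False pS unfolding rho_def by auto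
  define w where "w = (1/rho) *\<^sub>R (pS - z)"
  have w1: "norm w = 1" unfolding w_def using rho es0 by (auto simp: rho_def dist_norm norm_minus_commute)
  have pSw: "pS = z + rho *\<^sub>R w" unfolding w_def using rho es0 by simp
  obtain wt where wt: "wt \<in> Sd" "norm (w - wt) \<le> th" using dirs w1 unfolding direction_set_def by blast
  have wt1: "norm wt = 1" using wt dirs unfolding direction_set_def by auto
  define x where "x = z + es *\<^sub>R wt"
  have xst: "x \<in> stencil es Sd z" unfolding stencil_def x_def using wt by blast
  define p2 where "p2 = z + rho *\<^sub>R wt"
  have "dist x p2 = \<bar>rho - es\<bar> * norm wt" unfolding x_def p2_def dist_norm
    by (simp add: algebra_simps abs_minus_commute flip: scaleR_diff_left)
  then have dxp2: "dist x p2 \<le> es" using rho wt1 by simp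
  have "dist z p2 = rho" unfolding p2_def using wt1 rho es0 by (simp add: dist_norm)
  then have p2in: "p2 \<in> cball z (2*es)" using rho by simp
  then have p2O: "p2 \<in> closure \<Omega>" using sub closure_subset by blast
  have "dist z x = es" unfolding x_def using wt1 es0 by (simp add: dist_norm)
  then have "x \<in> \<Omega>" using sub es0 by auto
  then have xO: "x \<in> closure \<Omega>" using closure_subset by blast
  have up2: "u p2 \<le> v x" using v_upper[OF xO _ p2O] dxp2 by simp
  have "dist pS p2 = rho * norm (w - wt)" unfolding pSw p2_def dist_norm using rho es0
    by (simp add: algebra_simps flip: scaleR_diff_right)
  also have "\<dots> \<le> (2*es) * th" using rho wt es0 by (intro mult_mono) auto
  finally have "dist pS p2 \<le> 2*es*th" by simp
  moreover have "pS \<in> closure \<Omega>" using pS sub closure_subset by blast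
  ultimately have "\<bar>u pS - u p2\<bar> \<le> Lu*(2*es*th) powr al"
    using p2O by (intro hol_bound[OF holu Lu0 al0]) auto
  then show ?thesis using up2 xst by force
qed

lemma interp_lb:
  fixes U :: "'a \<Rightarrow> real" and c :: real
  assumes interp: "\<forall>x\<in>P. \<exists>Z mu. finite Z \<and> Z \<subseteq> N \<and> (\<forall>z\<in>Z. 0 \<le> mu z \<and> dist x z \<le> h) \<and> sum mu Z = 1
        \<and> U x = (\<Sum>z\<in>Z. mu z * U z)"
    and xP: "x \<in> P" and lb: "\<And>z. z \<in> N \<Longrightarrow> dist x z \<le> h \<Longrightarrow> c \<le> U z"
  shows "c \<le> U x"
proof -
  from bspec[OF interp xP] obtain Z mu where Z0: "finite Z \<and> Z \<subseteq> N \<and> (\<forall>z\<in>Z. 0 \<le> mu z \<and> dist x z \<le> h) \<and> sum mu Z = 1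
        \<and> U x = (\<Sum>z\<in>Z. mu z * U z)" by (elim exE)
  from Z0 have Z: "finite Z" "Z \<subseteq> N" "\<forall>z\<in>Z. 0 \<le> mu z \<and> dist x z \<le> h" "sum mu Z = 1"
    "U x = (\<Sum>z\<in>Z. mu z * U z)" by blast+
  have "(\<Sum>z\<in>Z. mu z) * c = (\<Sum>z\<in>Z. mu z * c)" by (rule sum_distrib_right)
  then have "c = (\<Sum>z\<in>Z. mu z * c)" using Z(4) by simp
  also have "\<dots> \<le> (\<Sum>z\<in>Z. mu z * U z)"
  proof (rule sum_mono)
    fix z assume z: "z \<in> Z"
    then have "0 \<le> mu z" "dist x z \<le> h" "z \<in> N" using Z(2,3) by auto
    then show "mu z * c \<le> mu z * U z" using lb by (simp add: mult_left_mono)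
  qed
  finally show ?thesis using Z(5) by simp
qed

lemma lin_helper2:
  fixes F Uz Mx Mn Ux1 A B C M :: real
  shows "2 * Uz - Mx - Mn = F \<Longrightarrow> Uz = A - M \<Longrightarrow> Ux1 \<le> Mx \<Longrightarrow> B - L - M \<le> Ux1 \<Longrightarrow> C - L - M \<le> Mn
    \<Longrightarrow> F \<le> 2 * (A - M) - (B - L - M) - (C - L - M)"
  by (smt (verit))

lemma core_bound:
  fixes U :: "'a \<Rightarrow> real"
  assumes qs: "qsub \<Omega> u f"
    and holf: "\<forall>x\<in>\<Omega>. \<forall>y\<in>\<Omega>. \<bar>f x - f y\<bar> \<le> Lf * dist x y powr al" and Lf0: "Lf \<ge> 0"
    and h: "0 \<le> h" "h \<le> es"
    and lam: "lam > 0" "\<forall>y\<in>\<Omega>. lam*(f y + eta) < f y"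
    and eta: "eta = Lf*(2*es) powr al + es powr al + (Lu*(2*es*th) powr al + 2*Lu*(2*h) powr al)/es\<^sup>2"
    and N: "finite N" "N \<subseteq> closure \<Omega>" "NI \<subseteq> N"
    and NIsub: "\<forall>z\<in>NI. cball z (2*es) \<subseteq> \<Omega>"
    and dirs: "direction_set th Sd" "th \<ge> 0"
    and interp: "\<forall>x\<in>P. \<exists>Z mu. finite Z \<and> Z \<subseteq> N \<and> (\<forall>z\<in>Z. 0 \<le> mu z \<and> dist x z \<le> h) \<and> sum mu Z = 1
        \<and> U x = (\<Sum>z\<in>Z. mu z * U z)"
    and stP: "\<forall>z\<in>NI. stencil es Sd z \<subseteq> P"
    and eq: "\<forall>z\<in>NI. 2*U z - Max (U ` stencil es Sd z) - Min (U ` stencil es Sd z) = es\<^sup>2 * f z"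
    and bdry: "\<forall>z\<in>N - NI. u z - U z \<le> Eb"
  shows "\<forall>z\<in>N. u z - U z \<le> 2*\<bar>lam - 1\<bar>*Mu + lam*Lu*es powr al + Eb"
proof (cases "N = {}")
  case True then show ?thesis by simp
next
  case Nne: False
  define W where "W z = lam * v z - U z" for z
  define M where "M = Max (W ` N)"
  have WM: "\<And>z. z \<in> N \<Longrightarrow> W z \<le> M" unfolding M_def using N(1) by simp
  have "M \<in> W ` N" unfolding M_def using N(1) Nne by (intro Max_in) auto
  then obtain zs where zs: "zs \<in> N" "W zs = M" by (metis imageE)
  have Mb: "M \<le> \<bar>lam - 1\<bar>*Mu + lam*Lu*es powr al + Eb"
  proof (cases "zs \<in> NI")
    case False
    have zO: "zs \<in> closure \<Omega>" using zs N by blast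
    have "lam * v zs \<le> lam * (u zs + Lu * es powr al)" using v_le_u[OF zO] lam by simp
    moreover have "(lam - 1) * u zs \<le> \<bar>lam - 1\<bar> * Mu"
    proof -
      have "(lam - 1) * u zs \<le> \<bar>(lam - 1) * u zs\<bar>" by simp
      also have "\<dots> = \<bar>lam - 1\<bar> * \<bar>u zs\<bar>" by (simp add: abs_mult)
      also have "\<dots> \<le> \<bar>lam - 1\<bar> * Mu" using Mu zO by (intro mult_left_mono) auto
      finally show ?thesis .
    qed
    moreover have "u zs - U zs \<le> Eb" using bdry zs False by blast
    ultimately show ?thesis using zs unfolding W_def by (simp add: algebra_simps)
  next
    case True
    have sub: "cball zs (2*es) \<subseteq> \<Omega>" using NIsub True by blast
    define st where "st = stencil es Sd zs"
    have stfin: "finite st" unfolding st_def stencil_def using dirs(1) unfolding direction_set_def by simp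
    have zst: "zs \<in> st" unfolding st_def stencil_def by simp
    have stP': "st \<subseteq> P" using stP True unfolding st_def by blast
    have stball: "\<And>x. x \<in> st \<Longrightarrow> cball x es \<subseteq> \<Omega> \<and> dist zs x \<le> es"
    proof -
      fix x assume "x \<in> st"
      then have dx: "dist zs x \<le> es"
        unfolding st_def stencil_def using dirs(1) es0 unfolding direction_set_def
        by (auto simp: dist_norm)
      have "cball x es \<subseteq> cball zs (2*es)"
      proof
        fix y assume "y \<in> cball x es"
        then have "dist x y \<le> es" by simp
        then show "y \<in> cball zs (2*es)" using dx dist_triangle[of zs y x] by simp
      qed
      then show "cball x es \<subseteq> \<Omega> \<and> dist zs x \<le> es" using sub dx by blast
    qed
    have Ulb: "lam * v x - lam * (Lu * (2*h) powr al) - M \<le> U x" if x: "x \<in> st" for x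
    proof (rule interp_lb[OF interp])
      show "x \<in> P" using x stP' by blast
    next
      fix z assume z: "z \<in> N" "dist x z \<le> h"
      have zO: "z \<in> closure \<Omega>" using z N by blast
      have "v x \<le> v z + Lu * (2*h) powr al" using v_shift[OF _ zO h z(2)] stball[OF x] by blast
      then have "lam * v x \<le> lam * (v z + Lu * (2*h) powr al)"
        using lam by (intro mult_left_mono) auto
      then have "lam * v x \<le> lam * v z + lam * (Lu * (2*h) powr al)"
        by (simp add: distrib_left)
      moreover have "W z \<le> M" using WM z by blast
      ultimately show "lam * v x - lam * (Lu * (2*h) powr al) - M \<le> U z" unfolding W_def by simp
    qed
    have zsO: "zs \<in> closure \<Omega>" using zs N by blast
    have contball: "continuous_on (cball zs (2*es)) u"
      using continuous_on_subset[OF contu] sub closure_subset by blast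
    obtain pS where pS: "pS \<in> cball zs (2*es)" "\<And>y. y \<in> cball zs (2*es) \<Longrightarrow> u y \<le> u pS"
      using continuous_attains_sup[OF compact_cball _ contball] es0 by fastforce
    obtain x1 where x1: "x1 \<in> st" "u pS \<le> v x1 + Lu*(2*es*th) powr al"
      using stencil_max[OF sub dirs pS(1)] unfolding st_def by blast
    have Umax: "U x1 \<le> Max (U ` st)" using x1 stfin by simp
    have "Min (U ` st) \<in> U ` st" using stfin zst by (intro Min_in) auto
    then obtain x2 where x2: "x2 \<in> st" "Min (U ` st) = U x2" by (metis imageE)
    have "x2 \<in> \<Omega>" using stball[OF x2(1)] es0 by auto
    then have "u zs \<le> v x2"
      using v_upper[of x2 zs] stball[OF x2(1)] zsO closure_subset es0 by (auto simp: dist_commute)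
    then have Umin: "lam * u zs - lam * (Lu * (2*h) powr al) - M \<le> Min (U ` st)"
    proof -
      have "lam * u zs \<le> lam * v x2" using \<open>u zs \<le> v x2\<close> lam by (intro mult_left_mono) auto
      then show ?thesis using Ulb[OF x2(1)] x2(2) by linarith
    qed
    obtain pV where pV: "pV \<in> cball zs es \<inter> closure \<Omega>" "v zs = u pV"
      using v_attain[OF zsO] by blast
    define k where "k = f zs + Lf*(2*es) powr al + es powr al"
    have zsOm: "zs \<in> \<Omega>" using sub es0 by auto
    have fk: "f y < k" if y: "y \<in> ball zs (2*es)" for y
    proof -
      have yO: "y \<in> \<Omega>" using y sub by auto
      have "\<bar>f y - f zs\<bar> \<le> Lf * (2*es) powr al"
        using y yO zsOm by (intro hol_bound[OF holf Lf0 al0]) (auto simp: dist_commute)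
      moreover have "es powr al > 0" using es0 by simp
      ultimately show ?thesis unfolding k_def by linarith
    qed
    have SC: "2 * u pV - u pS - u zs \<le> k * es\<^sup>2"
      by (rule sc_ineq[OF qs sub es0 contball pS fk]) (use pV in auto)
    have Uzs: "U zs = lam * v zs - M" using zs unfolding W_def by simp
    have eqz: "2*U zs - Max (U ` st) - Min (U ` st) = es\<^sup>2 * f zs" using eq True unfolding st_def by blast
    define E where "E = Lu*(2*es*th) powr al + 2*(Lu * (2*h) powr al)"
    have "es\<^sup>2 * f zs \<le> 2*(lam * v zs - M) - (lam * v x1 - lam * (Lu * (2*h) powr al) - M)
          - (lam * u zs - lam * (Lu * (2*h) powr al) - M)"
      using eqz Uzs Umax Ulb[OF x1(1)] Umin by (rule lin_helper2)
    also have "\<dots> = lam * (2 * v zs - v x1 - u zs) + 2 * lam * (Lu * (2*h) powr al)"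
      by (simp add: algebra_simps)
    also have "\<dots> \<le> lam * (2 * u pV - u pS - u zs + Lu*(2*es*th) powr al) + 2 * lam * (Lu * (2*h) powr al)"
      using x1(2) pV(2) lam by (intro add_right_mono mult_left_mono) auto
    also have "\<dots> \<le> lam * (k * es\<^sup>2 + Lu*(2*es*th) powr al) + 2 * lam * (Lu * (2*h) powr al)"
      using SC lam by (intro add_right_mono mult_left_mono) auto
    also have "\<dots> = lam * (k * es\<^sup>2 + E)" unfolding E_def by (simp add: algebra_simps)
    finally have A: "es\<^sup>2 * f zs \<le> lam * (k * es\<^sup>2 + E)" .
    have "k * es\<^sup>2 + E = es\<^sup>2 * (f zs + eta)"
      unfolding k_def eta E_def using es0 by (simp add: field_simps)
    then have "es\<^sup>2 * f zs \<le> es\<^sup>2 * (lam * (f zs + eta))" using A by (simp add: algebra_simps)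
    then have "f zs \<le> lam * (f zs + eta)" using es0 by simp
    then show ?thesis using lam(2) zsOm by fastforce
  qed
  show ?thesis
  proof
    fix z assume z: "z \<in> N"
    have zO: "z \<in> closure \<Omega>" using z N by blast
    have "u z - U z \<le> v z - U z" using v_ge_u[OF zO] by simp
    also have "\<dots> = W z + (1 - lam) * v z" unfolding W_def by (simp add: algebra_simps)
    also have "(1 - lam) * v z \<le> \<bar>lam - 1\<bar> * Mu"
    proof -
      have "(1 - lam) * v z \<le> \<bar>(1 - lam) * v z\<bar>" by simp
      also have "\<dots> = \<bar>lam - 1\<bar> * \<bar>v z\<bar>" by (simp add: abs_mult abs_minus_commute)
      also have "\<dots> \<le> \<bar>lam - 1\<bar> * Mu" using v_bound[OF zO] by (intro mult_left_mono) auto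
      finally show ?thesis .
    qed
    finally show "u z - U z \<le> 2*\<bar>lam - 1\<bar>*Mu + lam*Lu*es powr al + Eb"
      using WM[OF z] Mb by simp
  qed
qed

end

lemma mesh_simplex:
  assumes "mesh Tr" "T \<in> Tr"
  shows "\<exists>C. finite C \<and> \<not> affine_dependent C \<and> card C = DIM('a) + 1 \<and> T = convex hull (C :: 'a::euclidean_space set)"
proof -
  have "int DIM('a) simplex T" using assms unfolding mesh_def by blast
  then obtain C where C: "finite C" "\<not> affine_dependent C" "int (card C) = int DIM('a) + 1" "T = convex hull C"
    unfolding simplex by blast
  then show ?thesis by (intro exI[of _ C]) auto
qed

lemma mesh_vertices_nodes:
  assumes "T \<in> Tr" "\<not> affine_dependent C" "T = convex hull C"
  shows "C \<subseteq> nodes Tr"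
proof
  fix c assume "c \<in> C"
  then have "c extreme_point_of (convex hull C)"
    using extreme_point_of_convex_hull_affine_independent[OF assms(2)] by simp
  then show "c \<in> nodes Tr" unfolding nodes_def using assms(1,3) by auto
qed

lemma mesh_compact:
  assumes "mesh Tr" "T \<in> Tr" shows "compact T"
  using mesh_simplex[OF assms] by (auto intro: finite_imp_compact_convex_hull)

lemma mesh_size_ge:
  assumes "mesh Tr" "T \<in> Tr" shows "diameter T \<le> mesh_size Tr"
  using assms unfolding mesh_size_def mesh_def by (intro Max_ge) auto

lemma mesh_dist:
  assumes "mesh Tr" "T \<in> Tr" "x \<in> T" "y \<in> T" shows "dist x y \<le> mesh_size Tr"
proof -
  have "bounded T" using mesh_compact[OF assms(1,2)] by (rule compact_imp_bounded)
  then have "dist x y \<le> diameter T" using assms(3,4) by (rule diameter_bounded_bound)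
  then show ?thesis using mesh_size_ge[OF assms(1,2)] by linarith
qed

lemma mesh_diam_pos:
  assumes "mesh Tr" "T \<in> Tr" shows "diameter T > 0"
proof -
  obtain C where C: "finite C" "\<not> affine_dependent C" "card C = DIM('a) + 1" "T = convex hull (C :: 'a::euclidean_space set)"
    using mesh_simplex[OF assms] by blast
  have "card C \<ge> 2" using C(3) DIM_positive[where 'a='a] by linarith
  then have "\<not> card C \<le> Suc 0" by simp
  then have "\<not> (\<forall>x\<in>C. \<forall>y\<in>C. x = y)" using card_le_Suc0_iff_eq[OF C(1)] by simp
  then obtain a b where ab: "a \<in> C" "b \<in> C" "a \<noteq> b" by blast
  have CT: "C \<subseteq> T" unfolding C(4) by (rule hull_subset)
  have bT: "bounded T" using mesh_compact[OF assms] by (rule compact_imp_bounded)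
  have "dist a b \<le> diameter T" using bT by (rule diameter_bounded_bound) (use ab CT in blast)+
  moreover have "dist a b > 0" using ab(3) by simp
  ultimately show ?thesis by linarith
qed

lemma mesh_size_pos:
  assumes "mesh Tr" shows "mesh_size Tr > 0"
proof -
  obtain T where "T \<in> Tr" using assms unfolding mesh_def by blast
  then show ?thesis using mesh_diam_pos[OF assms] mesh_size_ge[OF assms] by fastforce
qed

lemma nodes_finite:
  assumes "mesh Tr" shows "finite (nodes (Tr :: 'a::euclidean_space set set))"
proof -
  have "nodes Tr \<subseteq> (\<Union>T\<in>Tr. {z. z extreme_point_of T})" unfolding nodes_def by blast
  moreover have "finite {z. z extreme_point_of T}" if T: "T \<in> Tr" for T
  proof -
    obtain C where C: "finite C" "T = convex hull (C :: 'a set)" using mesh_simplex[OF assms T] by blast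
    then have "{z. z extreme_point_of T} \<subseteq> C" using extreme_point_of_convex_hull by blast
    then show ?thesis using C(1) finite_subset by blast
  qed
  moreover have "finite Tr" using assms unfolding mesh_def by blast
  ultimately have "finite (\<Union>T\<in>Tr. {z. z extreme_point_of T})" by (intro finite_UN_I) auto
  then show ?thesis using \<open>nodes Tr \<subseteq> _\<close> by (rule finite_subset[rotated])
qed

lemma nodes_in_union: "nodes Tr \<subseteq> \<Union>Tr"
  unfolding nodes_def extreme_point_of_def by blast

lemma affine_comb:
  fixes a :: "'a::euclidean_space" and mu :: "'a \<Rightarrow> real"
  assumes "finite C" "sum mu C = 1" "\<forall>c\<in>C. w c = a \<bullet> c + b" "w x = a \<bullet> x + b"
    "(\<Sum>c\<in>C. mu c *\<^sub>R c) = x"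
  shows "w x = (\<Sum>c\<in>C. mu c * w c)"
proof -
  have "(\<Sum>c\<in>C. mu c * w c) = (\<Sum>c\<in>C. mu c * (a \<bullet> c) + mu c * b)"
    using assms(3) by (intro sum.cong) (auto simp: algebra_simps)
  also have "\<dots> = a \<bullet> (\<Sum>c\<in>C. mu c *\<^sub>R c) + (\<Sum>c\<in>C. mu c) * b"
    by (simp add: sum.distrib inner_sum_right sum_distrib_right)
  finally show ?thesis using assms by simp
qed

lemma mesh_interp:
  fixes w :: "'a::euclidean_space \<Rightarrow> real"
  assumes mesh: "mesh Tr" and w: "w \<in> Vh Tr" and x: "x \<in> \<Union>Tr"
  shows "\<exists>Z mu. finite Z \<and> Z \<subseteq> nodes Tr \<and> (\<forall>z\<in>Z. 0 \<le> mu z \<and> dist x z \<le> mesh_size Tr) \<and> sum mu Z = 1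
        \<and> w x = (\<Sum>z\<in>Z. mu z * w z)"
proof -
  obtain T where T: "T \<in> Tr" "x \<in> T" using x by blast
  obtain C where C: "finite C" "\<not> affine_dependent C" "T = convex hull C" using mesh_simplex[OF mesh T(1)] by blast
  have CN: "C \<subseteq> nodes Tr" by (rule mesh_vertices_nodes[OF T(1) C(2,3)])
  have "x \<in> convex hull C" using T(2) C(3) by simp
  then have "\<exists>mu. (\<forall>c\<in>C. 0 \<le> mu c) \<and> sum mu C = 1 \<and> (\<Sum>c\<in>C. mu c *\<^sub>R c) = x"
    unfolding convex_hull_finite[OF C(1)] by (rule CollectD)
  then obtain mu where mu: "\<forall>c\<in>C. 0 \<le> mu c" "sum mu C = 1" "(\<Sum>c\<in>C. mu c *\<^sub>R c) = x"
    by blast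
  obtain a b where ab: "\<forall>y\<in>T. w y = a \<bullet> y + b" using w T(1) unfolding Vh_def by blast
  have CT: "C \<subseteq> T" unfolding C(3) by (rule hull_subset)
  have "w x = (\<Sum>c\<in>C. mu c * w c)"
    using ab CT T(2) by (intro affine_comb[OF C(1) mu(2) _ _ mu(3)]) auto
  moreover have "\<forall>z\<in>C. 0 \<le> mu z \<and> dist x z \<le> mesh_size Tr"
  proof
    fix z assume z: "z \<in> C"
    then have "z \<in> T" using CT by blast
    then show "0 \<le> mu z \<and> dist x z \<le> mesh_size Tr" using mu(1) z mesh_dist[OF mesh T(1) T(2)] by simp
  qed
  ultimately show ?thesis using C(1) CN mu(2) by (intro exI[of _ C] exI[of _ mu]) simp
qed

lemma lagrange_eq:
  fixes w :: "'a::euclidean_space \<Rightarrow> real"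
  assumes mesh: "mesh Tr" and w: "w \<in> Vh Tr" and x: "x \<in> \<Union>Tr"
  shows "lagrange_interp Tr w x = w x"
proof -
  define c where "c y = (if y \<in> \<Union>Tr then w y else 0)" for y
  have Pc: "c \<in> Vh Tr \<and> (\<forall>z\<in>nodes Tr. c z = w z) \<and> (\<forall>y. y \<notin> \<Union>Tr \<longrightarrow> c y = 0)"
  proof (intro conjI)
    show "c \<in> Vh Tr" unfolding Vh_def
    proof (intro CollectI ballI)
      fix T assume T: "T \<in> Tr"
      obtain a b where ab: "\<forall>y\<in>T. w y = a \<bullet> y + b" using w T unfolding Vh_def by blast
      have "\<forall>y\<in>T. c y = a \<bullet> y + b" using ab T unfolding c_def by auto
      then show "\<exists>a b. \<forall>x\<in>T. c x = a \<bullet> x + b" by blast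
    qed
    show "\<forall>z\<in>nodes Tr. c z = w z" using nodes_in_union unfolding c_def by auto
    show "\<forall>y. y \<notin> \<Union>Tr \<longrightarrow> c y = 0" unfolding c_def by simp
  qed
  have uniq: "v' = c" if P: "v' \<in> Vh Tr \<and> (\<forall>z\<in>nodes Tr. v' z = w z) \<and> (\<forall>y. y \<notin> \<Union>Tr \<longrightarrow> v' y = 0)" for v'
  proof
    fix y show "v' y = c y"
    proof (cases "y \<in> \<Union>Tr")
      case False then show ?thesis using P unfolding c_def by simp
    next
      case True
      obtain T where T: "T \<in> Tr" "y \<in> T" using True by blast
      obtain C where C: "finite C" "\<not> affine_dependent C" "T = convex hull C" using mesh_simplex[OF mesh T(1)] by blast
      have CN: "C \<subseteq> nodes Tr" by (rule mesh_vertices_nodes[OF T(1) C(2,3)])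
      have "y \<in> convex hull C" using T(2) C(3) by simp
      then have "\<exists>mu. (\<forall>c\<in>C. 0 \<le> mu c) \<and> sum mu C = 1 \<and> (\<Sum>c\<in>C. mu c *\<^sub>R c) = y"
        unfolding convex_hull_finite[OF C(1)] by (rule CollectD)
      then obtain mu where mu: "\<forall>c\<in>C. 0 \<le> mu c" "sum mu C = 1" "(\<Sum>c\<in>C. mu c *\<^sub>R c) = y"
        by blast
      have CT: "C \<subseteq> T" unfolding C(3) by (rule hull_subset)
      obtain a b where ab: "\<forall>y\<in>T. w y = a \<bullet> y + b" using w T(1) unfolding Vh_def by blast
      obtain a' b' where ab': "\<forall>y\<in>T. v' y = a' \<bullet> y + b'" using P T(1) unfolding Vh_def by blast
      have "w y = (\<Sum>c\<in>C. mu c * w c)"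
        using ab CT T(2) by (intro affine_comb[OF C(1) mu(2) _ _ mu(3)]) auto
      moreover have "v' y = (\<Sum>c\<in>C. mu c * v' c)"
        using ab' CT T(2) by (intro affine_comb[OF C(1) mu(2) _ _ mu(3)]) auto
      moreover have "(\<Sum>c\<in>C. mu c * v' c) = (\<Sum>c\<in>C. mu c * w c)"
        using P CN by (intro sum.cong) auto
      ultimately show ?thesis using True unfolding c_def by simp
    qed
  qed
  have "lagrange_interp Tr w = c" unfolding lagrange_interp_def
    by (rule the_equality[where P="\<lambda>v'. v' \<in> Vh Tr \<and> (\<forall>z\<in>nodes Tr. v' z = w z) \<and> (\<forall>y. y \<notin> \<Union>Tr \<longrightarrow> v' y = 0)", OF Pc uniq])
  then show ?thesis using x unfolding c_def by simp
qed

lemma cball_in_open: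
  fixes \<Omega> :: "'a::euclidean_space set"
  assumes "open \<Omega>" "z \<in> \<Omega>" "infdist z (frontier \<Omega>) > r"
  shows "cball z r \<subseteq> \<Omega>"
proof
  fix y assume y: "y \<in> cball z r"
  show "y \<in> \<Omega>"
  proof (rule ccontr)
    assume "y \<notin> \<Omega>"
    have "dist z y \<le> r" using y by simp
    then have "r \<ge> 0" using zero_le_dist[of z y] by linarith
    then have "z \<in> cball z r \<inter> \<Omega>" using assms(2) by simp
    then have "cball z r \<inter> \<Omega> \<noteq> {}" by blast
    moreover have "cball z r - \<Omega> \<noteq> {}" using y \<open>y \<notin> \<Omega>\<close> by blast
    ultimately have "cball z r \<inter> frontier \<Omega> \<noteq> {}"
      by (intro connected_Int_frontier) (auto intro: convex_connected)
    then obtain q where q: "q \<in> cball z r" "q \<in> frontier \<Omega>" by blast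
    have "infdist z (frontier \<Omega>) \<le> dist z q" using q(2) by (rule infdist_le)
    then show False using q(1) assms(3) by simp
  qed
qed

lemma Max_neg_img:
  fixes U :: "'a \<Rightarrow> real"
  assumes "finite A" "A \<noteq> {}"
  shows "Max ((\<lambda>x. - U x) ` A) = - Min (U ` A)"
proof (rule Max_eqI)
  show "finite ((\<lambda>x. - U x) ` A)" using assms by simp
  have m: "Min (U ` A) \<in> U ` A" using assms by (intro Min_in) auto
  then show "- Min (U ` A) \<in> (\<lambda>x. - U x) ` A" by auto
  fix y assume "y \<in> (\<lambda>x. - U x) ` A"
  then obtain x where x: "x \<in> A" "y = - U x" by blast
  have "Min (U ` A) \<le> U x" using assms x by (intro Min_le) auto
  then show "y \<le> - Min (U ` A)" using x by simp
qed

lemma Min_neg_img: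
  fixes U :: "'a \<Rightarrow> real"
  assumes "finite A" "A \<noteq> {}"
  shows "Min ((\<lambda>x. - U x) ` A) = - Max (U ` A)"
proof (rule Min_eqI)
  show "finite ((\<lambda>x. - U x) ` A)" using assms by simp
  have m: "Max (U ` A) \<in> U ` A" using assms by (intro Max_in) auto
  then show "- Max (U ` A) \<in> (\<lambda>x. - U x) ` A" by auto
  fix y assume "y \<in> (\<lambda>x. - U x) ` A"
  then obtain x where x: "x \<in> A" "y = - U x" by blast
  have "U x \<le> Max (U ` A)" using assms x by (intro Max_ge) auto
  then show "- Max (U ` A) \<le> y" using x by simp
qed

lemma frontier_ne:
  fixes \<Omega> :: "'a::euclidean_space set"
  assumes "bounded_domain_cont_bdry \<Omega>" shows "frontier \<Omega> \<noteq> {}"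
proof -
  have "\<Omega> \<noteq> {}" "bounded \<Omega>" using assms unfolding bounded_domain_cont_bdry_def by auto
  then have "\<Omega> \<noteq> UNIV" by auto
  then show ?thesis using \<open>\<Omega> \<noteq> {}\<close> frontier_eq_empty by blast
qed

lemma near_frontier:
  fixes \<Omega> :: "'a::euclidean_space set"
  assumes op: "open \<Omega>" and fne: "frontier \<Omega> \<noteq> {}" and z: "z \<in> closure \<Omega>" and nz: "z \<notin> inner_set \<Omega> r"
    and r: "r \<ge> 0"
  shows "\<exists>y\<in>frontier \<Omega>. dist z y \<le> r"
proof (cases "z \<in> \<Omega>")
  case False
  then have "z \<in> frontier \<Omega>" using z op unfolding frontier_def by (simp add: interior_open)
  then show ?thesis using r by (intro bexI[of _ z]) auto
next
  case True
  then have "infdist z (frontier \<Omega>) \<le> r" using nz unfolding inner_set_def by simp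
  moreover obtain y where "y \<in> frontier \<Omega>" "infdist z (frontier \<Omega>) = dist z y"
    using infdist_attains_inf[OF frontier_closed fne] by blast
  ultimately show ?thesis by auto
qed

lemma mesh_in_closure:
  fixes Tr :: "'a::euclidean_space set set"
  assumes mesh: "mesh Tr" and qu: "quasiuniform sig Tr" and sig: "sig \<ge> 1"
    and md: "mesh_domain Tr \<subseteq> \<Omega>"
  shows "\<Union>Tr \<subseteq> closure \<Omega>"
proof
  fix x assume "x \<in> \<Union>Tr"
  then obtain T where T: "T \<in> Tr" "x \<in> T" by blast
  obtain c where c: "ball c (diameter T / sig) \<subseteq> T" using qu T(1) unfolding quasiuniform_def by blast
  have "diameter T / sig > 0" using mesh_diam_pos[OF mesh T(1)] sig by simp
  then have "c \<in> interior T" using c by (meson centre_in_ball interior_maximal open_ball subsetD)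
  then have intne: "interior T \<noteq> {}" by blast
  obtain C where C: "finite C" "T = convex hull (C :: 'a set)" using mesh_simplex[OF mesh T(1)] by blast
  have cvx: "convex T" unfolding C(2) by (rule convex_convex_hull)
  have "x \<in> closure (interior T)" using convex_closure_interior[OF cvx intne] T(2) closure_subset by blast
  moreover have "interior T \<subseteq> \<Omega>"
  proof -
    have "interior T \<subseteq> interior (\<Union>Tr)" using T(1) by (intro interior_mono) blast
    then show ?thesis using md unfolding mesh_domain_def by blast
  qed
  ultimately show "x \<in> closure \<Omega>" using closure_mono by blast
qed

lemma interior_node_facts:
  fixes \<Omega> :: "'a::euclidean_space set"
  assumes op: "open \<Omega>" and z: "z \<in> interior_nodes \<Omega> Tr es"
    and inn: "inner_set \<Omega> h \<subseteq> mesh_domain Tr" and h: "h \<le> es" and es: "es > 0"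
    and dirs: "direction_set th S"
  shows "cball z (2*es) \<subseteq> \<Omega>" "stencil es S z \<subseteq> \<Union>Tr"
proof -
  have zO: "z \<in> \<Omega>" and zd: "infdist z (frontier \<Omega>) > 2*es" and zn: "z \<in> nodes Tr"
    using z unfolding interior_nodes_def inner_set_def by auto
  show cb: "cball z (2*es) \<subseteq> \<Omega>" by (rule cball_in_open[OF op zO zd])
  show "stencil es S z \<subseteq> \<Union>Tr"
  proof
    fix x assume "x \<in> stencil es S z"
    then consider "x = z" | w where "w \<in> S" "x = z + es *\<^sub>R w" unfolding stencil_def by blast
    then show "x \<in> \<Union>Tr"
    proof cases
      case 1 then show ?thesis using zn nodes_in_union by blast
    next
      case 2
      have "norm w = 1" using 2(1) dirs unfolding direction_set_def by auto
      then have dzx: "dist z x = es" using 2(2) es by (simp add: dist_norm)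
      then have "x \<in> \<Omega>" using cb es by auto
      moreover have "infdist z (frontier \<Omega>) \<le> infdist x (frontier \<Omega>) + dist z x" by (rule infdist_triangle)
      then have "infdist x (frontier \<Omega>) > h" using zd dzx h by simp
      ultimately have "x \<in> inner_set \<Omega> h" unfolding inner_set_def by simp
      then have "x \<in> interior (\<Union>Tr)" using inn unfolding mesh_domain_def by blast
      then show ?thesis using interior_subset by blast
    qed
  qed
qed

lemma lam_exists:
  fixes f :: "'a \<Rightarrow> real"
  assumes c0: "c0 > 0" and eta: "0 < eta" "eta < c0/2"
    and sgn: "(\<forall>y\<in>\<Omega>. f y \<ge> c0) \<or> (\<forall>y\<in>\<Omega>. f y \<le> - c0)"
  shows "\<exists>lam>0. \<bar>lam - 1\<bar> \<le> 2*eta/c0 \<and> (\<forall>y\<in>\<Omega>. lam*(f y + eta) < f y)"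
  using sgn
proof
  assume pos: "\<forall>y\<in>\<Omega>. f y \<ge> c0"
  define lam where "lam = 1 - 2*eta/c0"
  have t: "2*eta/c0 < 1" using eta c0 by (simp add: field_simps)
  have "lam > 0" unfolding lam_def using t by simp
  moreover have "\<bar>lam - 1\<bar> \<le> 2*eta/c0" unfolding lam_def using eta c0 by simp
  moreover have "lam*(f y + eta) < f y" if y: "y \<in> \<Omega>" for y
  proof -
    have "(2*eta/c0) * f y \<ge> (2*eta/c0) * c0" using pos y eta c0 by (intro mult_left_mono) auto
    then have A: "(2*eta/c0) * f y \<ge> 2*eta" using c0 by simp
    have "lam * eta < eta" unfolding lam_def using eta c0 by (simp add: field_simps)
    moreover have "lam*(f y + eta) = f y - (2*eta/c0) * f y + lam * eta" unfolding lam_def by (simp add: algebra_simps diff_divide_distrib add_divide_distrib)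
    ultimately show ?thesis using A eta by linarith
  qed
  ultimately show ?thesis by blast
next
  assume neg: "\<forall>y\<in>\<Omega>. f y \<le> - c0"
  define lam where "lam = 1 + 2*eta/c0"
  have t: "2*eta/c0 < 1" using eta c0 by (simp add: field_simps)
  have "2*eta/c0 > 0" using eta c0 by simp
  then have "lam > 0" unfolding lam_def by linarith
  moreover have "\<bar>lam - 1\<bar> \<le> 2*eta/c0" unfolding lam_def using eta c0 by simp
  moreover have "lam*(f y + eta) < f y" if y: "y \<in> \<Omega>" for y
  proof -
    have "(2*eta/c0) * f y \<le> (2*eta/c0) * (-c0)" using neg y eta c0 by (intro mult_left_mono) auto
    then have A: "(2*eta/c0) * f y \<le> - 2*eta" using c0 by simp
    have "(2*eta/c0)*eta < 1*eta" using t eta by (intro mult_strict_right_mono) auto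
    then have "lam * eta < 2 * eta" unfolding lam_def by (simp add: distrib_right)
    moreover have "lam*(f y + eta) = f y + (2*eta/c0) * f y + lam * eta" unfolding lam_def by (simp add: algebra_simps add_divide_distrib)
    ultimately show ?thesis using A eta by linarith
  qed
  ultimately show ?thesis by blast
qed

lemma rate_bounds:
  fixes al h es th c1 c2 k2 :: real
  assumes al: "0 < al" "al \<le> 1" and h: "0 < h" "h \<le> 1" and c1: "0 < c1" "c1 \<le> c2" and k2: "0 \<le> k2"
    and e1: "c1 * h powr (al/(2+al)) \<le> es" and e2: "es \<le> c2 * h powr (al/(2+al))"
    and et: "es*th \<le> k2*h" and th: "th > 0"
  shows "es powr al \<le> c2 powr al * h powr (al\<^sup>2/(2+al))"
    and "(2*es) powr al \<le> 2 * c2 powr al * h powr (al\<^sup>2/(2+al))"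
    and "(2*es*th) powr al / es\<^sup>2 \<le> (2*k2) powr al / c1\<^sup>2 * h powr (al\<^sup>2/(2+al))"
    and "(2*h) powr al / es\<^sup>2 \<le> 2 / c1\<^sup>2 * h powr (al\<^sup>2/(2+al))"
    and "h powr al \<le> h powr (al\<^sup>2/(2+al))"
proof -
  define b where "b = al/(2+al)"
  define g where "g = al\<^sup>2/(2+al)"
  have bal: "b * al = g" unfolding b_def g_def by (simp add: power2_eq_square)
  have al2b: "al - 2*b = g" unfolding b_def g_def using al by (simp add: field_simps power2_eq_square)
  have gle: "g \<le> al" unfolding g_def using al by (simp add: field_simps power2_eq_square)
  define H where "H = h powr b"
  have H: "H > 0" unfolding H_def using h by simp
  have es0: "es > 0" using e1 c1 H unfolding H_def b_def by (smt (verit) mult_pos_pos)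
  have twole: "(2::real) powr al \<le> 2"
  proof -
    have "(2::real) powr al \<le> 2 powr 1" by (rule powr_mono) (use al in auto)
    then show ?thesis by simp
  qed
  show A: "es powr al \<le> c2 powr al * h powr (al\<^sup>2/(2+al))"
  proof -
    have "es powr al \<le> (c2 * H) powr al" using e2 es0 al unfolding H_def b_def by (intro powr_mono2) auto
    also have "\<dots> = c2 powr al * H powr al" using c1 H by (simp add: powr_mult)
    also have "H powr al = h powr g" unfolding H_def using bal by (simp add: powr_powr)
    finally show ?thesis unfolding g_def .
  qed
  show "(2*es) powr al \<le> 2 * c2 powr al * h powr (al\<^sup>2/(2+al))"
  proof -
    have "(2*es) powr al = 2 powr al * es powr al" using es0 by (simp add: powr_mult)
    also have "\<dots> \<le> 2 * es powr al" using twole by (intro mult_right_mono) auto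
    also have "\<dots> \<le> 2 * (c2 powr al * h powr (al\<^sup>2/(2+al)))" using A by simp
    finally show ?thesis by simp
  qed
  have esq: "(c1 * H)\<^sup>2 \<le> es\<^sup>2" using e1 c1 H unfolding H_def b_def by (intro power_mono) auto
  have H2: "H\<^sup>2 = h powr (2*b)" unfolding H_def using h by (simp add: power2_eq_square powr_add[symmetric])
  have ratio: "h powr al / H\<^sup>2 = h powr g" unfolding H2 using h al2b by (simp add: powr_diff[symmetric])
  have keydiv: "X / es\<^sup>2 \<le> Y / c1\<^sup>2 * h powr g" if X: "0 \<le> X" "X \<le> Y * h powr al" for X Y
  proof -
    have "X / es\<^sup>2 \<le> X / (c1 * H)\<^sup>2" using X esq c1 H es0 by (intro divide_left_mono) auto
    also have "\<dots> \<le> (Y * h powr al) / (c1 * H)\<^sup>2" using X c1 H by (intro divide_right_mono) auto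
    also have "\<dots> = Y / c1\<^sup>2 * (h powr al / H\<^sup>2)" by (simp add: power_mult_distrib)
    also have "\<dots> = Y / c1\<^sup>2 * h powr g" unfolding ratio ..
    finally show ?thesis .
  qed
  show "(2*es*th) powr al / es\<^sup>2 \<le> (2*k2) powr al / c1\<^sup>2 * h powr (al\<^sup>2/(2+al))"
  proof -
    have "(2*es*th) powr al \<le> (2*k2*h) powr al" using et es0 th al by (intro powr_mono2) auto
    also have "\<dots> = (2*k2) powr al * h powr al" using k2 h by (simp add: powr_mult)
    finally have "(2*es*th) powr al \<le> (2*k2) powr al * h powr al" .
    then show ?thesis unfolding g_def[symmetric] by (intro keydiv) auto
  qed
  show "(2*h) powr al / es\<^sup>2 \<le> 2 / c1\<^sup>2 * h powr (al\<^sup>2/(2+al))"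
  proof -
    have "(2*h) powr al = 2 powr al * h powr al" using h by (simp add: powr_mult)
    also have "\<dots> \<le> 2 * h powr al" using twole by (intro mult_right_mono) auto
    finally have "(2*h) powr al \<le> 2 * h powr al" .
    then show ?thesis unfolding g_def[symmetric] by (intro keydiv) auto
  qed
  show "h powr al \<le> h powr (al\<^sup>2/(2+al))" using gle h unfolding g_def by (intro powr_mono') auto
qed

lemma conv_le:
  fixes W :: "'a \<Rightarrow> real"
  assumes "finite Z" "sum mu Z = 1" "\<forall>z\<in>Z. 0 \<le> mu z" "\<forall>z\<in>Z. W z \<le> c"
  shows "(\<Sum>z\<in>Z. mu z * W z) \<le> c"
proof -
  have "(\<Sum>z\<in>Z. mu z * W z) \<le> (\<Sum>z\<in>Z. mu z * c)"
  proof (rule sum_mono)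
    fix z assume "z \<in> Z" then show "mu z * W z \<le> mu z * c" using assms by (simp add: mult_left_mono)
  qed
  also have "(\<Sum>z\<in>Z. mu z * c) = (\<Sum>z\<in>Z. mu z) * c" by (rule sum_distrib_right[symmetric])
  finally show ?thesis using assms(2) by simp
qed

lemma Vh_neg: "U \<in> Vh Tr \<Longrightarrow> (\<lambda>x. - U x) \<in> Vh Tr"
  unfolding Vh_def
proof (intro CollectI ballI)
  fix T assume "U \<in> {w. \<forall>T\<in>Tr. \<exists>a b. \<forall>x\<in>T. w x = a \<bullet> x + b}" "T \<in> Tr"
  then obtain a b where "\<forall>x\<in>T. U x = a \<bullet> x + b" by blast
  then have "\<forall>x\<in>T. - U x = (-a) \<bullet> x + (-b)" by simp
  then show "\<exists>a b. \<forall>x\<in>T. - U x = a \<bullet> x + b" by blast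
qed

lemma one_side:
  fixes \<Omega> :: "'a::euclidean_space set" and u f U :: "'a \<Rightarrow> real" and Tr :: "'a set set"
  assumes op: "open \<Omega>"
    and qs: "qsub \<Omega> u f" and contu: "continuous_on (closure \<Omega>) u"
    and holu: "\<forall>x\<in>closure \<Omega>. \<forall>y\<in>closure \<Omega>. \<bar>u x - u y\<bar> \<le> Lu * dist x y powr al"
    and Mu: "\<forall>x\<in>closure \<Omega>. \<bar>u x\<bar> \<le> Mu" and Lu0: "Lu \<ge> 0" and al: "al > 0"
    and holf: "\<forall>x\<in>\<Omega>. \<forall>y\<in>\<Omega>. \<bar>f x - f y\<bar> \<le> Lf * dist x y powr al" and Lf0: "Lf \<ge> 0"
    and mesh: "mesh Tr" and qu: "quasiuniform sig Tr" and sig: "sig \<ge> 1"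
    and inn: "inner_set \<Omega> (mesh_size Tr) \<subseteq> mesh_domain Tr" and md: "mesh_domain Tr \<subseteq> \<Omega>"
    and hes: "mesh_size Tr \<le> es"
    and dirs: "direction_set th S" and th: "th > 0"
    and UV: "U \<in> Vh Tr"
    and eqU: "\<forall>z\<in>interior_nodes \<Omega> Tr es. 2*U z - Max (U ` stencil es S z) - Min (U ` stencil es S z) = es\<^sup>2 * f z"
    and bdry: "\<forall>z\<in>nodes Tr - interior_nodes \<Omega> Tr es. u z - U z \<le> Eb"
    and lam: "lam > 0" "\<forall>y\<in>\<Omega>. lam*(f y + eta) < f y"
    and eta: "eta = Lf*(2*es) powr al + es powr al + (Lu*(2*es*th) powr al + 2*Lu*(2*mesh_size Tr) powr al)/es\<^sup>2"
  shows "\<forall>x\<in>mesh_domain Tr. u x - U x \<le> 2*\<bar>lam - 1\<bar>*Mu + lam*Lu*es powr al + Eb + Lu * mesh_size Tr powr al"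
proof -
  define h where "h = mesh_size Tr"
  have h0: "h > 0" unfolding h_def by (rule mesh_size_pos[OF mesh])
  have es0: "es > 0" using h0 hes unfolding h_def by simp
  interpret core \<Omega> u f Lu Mu Lf al es
    using contu holu Mu Lu0 al es0 by unfold_locales auto
  have Ncl: "nodes Tr \<subseteq> closure \<Omega>" using mesh_in_closure[OF mesh qu sig md] nodes_in_union by blast
  have nb: "\<forall>z\<in>nodes Tr. u z - U z \<le> 2*\<bar>lam - 1\<bar>*Mu + lam*Lu*es powr al + Eb"
  proof (rule core_bound[OF qs holf Lf0 _ _ lam eta[folded h_def]])
    show "0 \<le> h" using h0 by simp
    show "h \<le> es" using hes unfolding h_def .
    show "finite (nodes Tr)" by (rule nodes_finite[OF mesh])
    show "nodes Tr \<subseteq> closure \<Omega>" by (rule Ncl)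
    show "interior_nodes \<Omega> Tr es \<subseteq> nodes Tr" unfolding interior_nodes_def by blast
    show "\<forall>z\<in>interior_nodes \<Omega> Tr es. cball z (2*es) \<subseteq> \<Omega>"
      using interior_node_facts(1)[OF op _ inn hes es0 dirs] by blast
    show "direction_set th S" by (rule dirs)
    show "th \<ge> 0" using th by simp
    show "\<forall>x\<in>\<Union>Tr. \<exists>Z mu. finite Z \<and> Z \<subseteq> nodes Tr \<and> (\<forall>z\<in>Z. 0 \<le> mu z \<and> dist x z \<le> h) \<and> sum mu Z = 1
        \<and> U x = (\<Sum>z\<in>Z. mu z * U z)"
      unfolding h_def using mesh_interp[OF mesh UV] by blast
    show "\<forall>z\<in>interior_nodes \<Omega> Tr es. stencil es S z \<subseteq> \<Union>Tr"
      using interior_node_facts(2)[OF op _ inn hes es0 dirs] by blast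
    show "\<forall>z\<in>interior_nodes \<Omega> Tr es. 2*U z - Max (U ` stencil es S z) - Min (U ` stencil es S z) = es\<^sup>2 * f z"
      by (rule eqU)
    show "\<forall>z\<in>nodes Tr - interior_nodes \<Omega> Tr es. u z - U z \<le> Eb" by (rule bdry)
  qed
  show ?thesis
  proof
    fix x assume x: "x \<in> mesh_domain Tr"
    have xU: "x \<in> \<Union>Tr" using x interior_subset unfolding mesh_domain_def by blast
    have xO: "x \<in> closure \<Omega>" using x md closure_subset by blast
    obtain Z mu where Z: "finite Z" "Z \<subseteq> nodes Tr" "\<forall>z\<in>Z. 0 \<le> mu z \<and> dist x z \<le> h" "sum mu Z = 1"
        "U x = (\<Sum>z\<in>Z. mu z * U z)"
      using mesh_interp[OF mesh UV xU] unfolding h_def by blast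
    define B where "B = 2*\<bar>lam - 1\<bar>*Mu + lam*Lu*es powr al + Eb + Lu * h powr al"
    have "(\<Sum>z\<in>Z. mu z * (u x - U z)) \<le> B"
    proof (rule conv_le[OF Z(1) Z(4)])
      show "\<forall>z\<in>Z. 0 \<le> mu z" using Z(3) by blast
      show "\<forall>z\<in>Z. u x - U z \<le> B"
      proof
        fix z assume z: "z \<in> Z"
        have zN: "z \<in> nodes Tr" using z Z(2) by blast
        have "\<bar>u x - u z\<bar> \<le> Lu * h powr al"
          using xO Ncl zN Z(3) z al by (intro hol_bound[OF holu Lu0]) auto
        then show "u x - U z \<le> B" using nb zN unfolding B_def by fastforce
      qed
    qed
    moreover have "(\<Sum>z\<in>Z. mu z * (u x - U z)) = u x - U x"
    proof -
      have "(\<Sum>z\<in>Z. mu z * (u x - U z)) = (\<Sum>z\<in>Z. mu z) * u x - (\<Sum>z\<in>Z. mu z * U z)"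
        by (simp add: right_diff_distrib sum_subtractf sum_distrib_right)
      then show ?thesis using Z(4,5) by simp
    qed
    ultimately show "u x - U x \<le> 2*\<bar>lam - 1\<bar>*Mu + lam*Lu*es powr al + Eb + Lu * mesh_size Tr powr al"
      unfolding B_def h_def by simp
  qed
qed

lemma final_arith:
  fixes Mu Lu Cg Lg c0 Keta H lam eta E1 E2 P c2a :: real
  assumes nn: "Mu \<ge> 0" "Lu \<ge> 0" "Cg \<ge> 0" "Lg \<ge> 0" "Keta \<ge> 0" "H \<ge> 0" "c2a \<ge> 0"
    and c0: "c0 > 0"
    and lam: "\<bar>lam - 1\<bar> \<le> 2*eta/c0" "lam > 0" and eta: "eta \<le> Keta * H" "2*eta/c0 \<le> 1"
    and E: "0 \<le> E1" "E1 \<le> c2a * H" "0 \<le> E2" "E2 \<le> 2 * c2a * H" "P \<le> H"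
  shows "2*\<bar>lam - 1\<bar>*Mu + lam*Lu*E1 + (Lu*E2 + Cg*E1 + Lg*E2) + Lu*P
     \<le> (4*Mu*Keta/c0 + 2*Lu*c2a + (2*Lu + Cg + 2*Lg)*c2a + Lu + 1) * H"
proof -
  have l2: "lam \<le> 2" using lam eta by linarith
  have a1: "\<bar>lam - 1\<bar> \<le> 2*Keta*H/c0"
  proof -
    have "2*eta/c0 \<le> 2*(Keta*H)/c0" using eta c0 by (intro divide_right_mono) auto
    then show ?thesis using lam by simp
  qed
  have t1: "2*\<bar>lam - 1\<bar>*Mu \<le> 4*Mu*Keta/c0 * H"
  proof -
    have "2*\<bar>lam - 1\<bar>*Mu \<le> 2*(2*Keta*H/c0)*Mu" using a1 nn by (intro mult_right_mono) auto
    then show ?thesis by (simp add: algebra_simps)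
  qed
  have t2: "lam*Lu*E1 \<le> 2*Lu*c2a * H"
  proof -
    have "lam*Lu*E1 \<le> 2*Lu*(c2a*H)" using l2 E nn lam by (intro mult_mono) auto
    then show ?thesis by (simp add: algebra_simps)
  qed
  have t3: "Lu*E2 + Cg*E1 + Lg*E2 \<le> (2*Lu + Cg + 2*Lg)*c2a * H"
  proof -
    have "Lu*E2 \<le> Lu*(2*c2a*H)" using E nn by (intro mult_left_mono) auto
    moreover have "Cg*E1 \<le> Cg*(c2a*H)" using E nn by (intro mult_left_mono) auto
    moreover have "Lg*E2 \<le> Lg*(2*c2a*H)" using E nn by (intro mult_left_mono) auto
    ultimately show ?thesis by (simp add: algebra_simps)
  qed
  have t4: "Lu*P \<le> Lu*H" using E nn by (intro mult_left_mono) auto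
  have "2*\<bar>lam - 1\<bar>*Mu + lam*Lu*E1 + (Lu*E2 + Cg*E1 + Lg*E2) + Lu*P
      \<le> 4*Mu*Keta/c0 * H + 2*Lu*c2a * H + (2*Lu + Cg + 2*Lg)*c2a * H + Lu*H + 1*H"
    using t1 t2 t3 t4 nn by linarith
  also have "\<dots> = (4*Mu*Keta/c0 + 2*Lu*c2a + (2*Lu + Cg + 2*Lg)*c2a + Lu + 1) * H"
    by (simp add: algebra_simps)
  finally show ?thesis .
qed

theorem corollary4p2:
  fixes \<Omega> :: "'a::euclidean_space set"
    and f g u :: "'a \<Rightarrow> real"
    and gt :: "real \<Rightarrow> 'a \<Rightarrow> real"
    and \<alpha> \<sigma> c\<^sub>1 c\<^sub>2 k\<^sub>1 k\<^sub>2 :: real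
  assumes dom: "bounded_domain_cont_bdry \<Omega>"
    and RHS1: "continuous_on \<Omega> f" "bounded (f ` \<Omega>)"
    and RHS2a: "(\<exists>c>0. \<forall>x\<in>\<Omega>. f x \<le> - c) \<or> (\<exists>c>0. \<forall>x\<in>\<Omega>. f x \<ge> c)"
    and BC1: "continuous_on (frontier \<Omega>) g"
    and BC2: "\<forall>\<epsilon>>0. continuous_on (closure \<Omega>) (gt \<epsilon>)"
      "\<forall>\<beta>\<in>{0..1}. holder_on \<beta> (frontier \<Omega>) g \<longrightarrow>
         (\<exists>L C. \<forall>\<epsilon>>0. holder_on \<beta> (closure \<Omega>) (gt \<epsilon>) \<and> holder_const \<beta> L (closure \<Omega>) (gt \<epsilon>)
                 \<and> (\<forall>x\<in>frontier \<Omega>. \<bar>g x - gt \<epsilon> x\<bar> \<le> C * \<epsilon> powr \<beta>))"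
    and alpha: "0 < \<alpha>" "\<alpha> \<le> 1"
    and f_hol: "holder_on \<alpha> \<Omega> f"
    and g_hol: "holder_on \<alpha> (frontier \<Omega>) g"
    and visc: "viscosity_solution \<Omega> f g u"
    and u_hol: "holder_on \<alpha> (closure \<Omega>) u"
    and sigma: "\<sigma> \<ge> 1"
    and params: "0 < c\<^sub>1" "c\<^sub>1 \<le> c\<^sub>2" "0 < k\<^sub>1" "k\<^sub>1 \<le> k\<^sub>2"
  shows "\<exists>C h\<^sub>0. C > 0 \<and> h\<^sub>0 > 0 \<and>
    (\<forall>(\<T> :: 'a set set) \<epsilon> \<theta> S uh.
       mesh \<T> \<and> quasiuniform \<sigma> \<T> \<and> mesh_size \<T> < h\<^sub>0 \<and>
       inner_set \<Omega> (mesh_size \<T>) \<subseteq> mesh_domain \<T> \<and> mesh_domain \<T> \<subseteq> \<Omega> \<and>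
       mesh_size \<T> \<le> \<epsilon> \<and> \<epsilon> \<le> diameter \<Omega> \<and> 0 < \<theta> \<and> \<theta> \<le> 1 \<and>
       c\<^sub>1 * mesh_size \<T> powr (\<alpha> / (2 + \<alpha>)) \<le> \<epsilon> \<and>
       \<epsilon> \<le> c\<^sub>2 * mesh_size \<T> powr (\<alpha> / (2 + \<alpha>)) \<and>
       k\<^sub>1 * mesh_size \<T> \<le> \<epsilon> * \<theta> \<and> \<epsilon> * \<theta> \<le> k\<^sub>2 * mesh_size \<T> \<and>
       direction_set \<theta> S \<and>
       discrete_solution \<Omega> \<T> \<epsilon> S f (gt \<epsilon>) uh
       \<longrightarrow> (\<forall>x\<in>mesh_domain \<T>. \<bar>u x - uh x\<bar> \<le> C * mesh_size \<T> powr (\<alpha>\<^sup>2 / (2 + \<alpha>))))"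
proof -
  have op: "open \<Omega>" using dom unfolding bounded_domain_cont_bdry_def by blast
  have fne: "frontier \<Omega> \<noteq> {}" by (rule frontier_ne[OF dom])
  have contu: "continuous_on (closure \<Omega>) u" and bc: "\<forall>x\<in>frontier \<Omega>. u x = g x"
    using visc unfolding viscosity_solution_def by auto
  have qs1: "qsub \<Omega> u f" by (rule visc_qsub[OF visc])
  have qs2: "qsub \<Omega> (\<lambda>x. - u x) (\<lambda>x. - f x)" by (rule visc_qsub_neg[OF visc])
  obtain Lu0 where Lu0: "holder_const \<alpha> Lu0 (closure \<Omega>) u" using u_hol unfolding holder_on_def by blast
  define Lu where "Lu = \<bar>Lu0\<bar>"
  have Lu: "Lu \<ge> 0" unfolding Lu_def by simp
  have holu: "\<forall>x\<in>closure \<Omega>. \<forall>y\<in>closure \<Omega>. \<bar>u x - u y\<bar> \<le> Lu * dist x y powr \<alpha>"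
  proof (intro ballI)
    fix x y assume "x \<in> closure \<Omega>" "y \<in> closure \<Omega>"
    then have "\<bar>u x - u y\<bar> \<le> Lu0 * dist x y powr \<alpha>" using Lu0 unfolding holder_const_def by blast
    also have "\<dots> \<le> Lu * dist x y powr \<alpha>" unfolding Lu_def by (intro mult_right_mono) auto
    finally show "\<bar>u x - u y\<bar> \<le> Lu * dist x y powr \<alpha>" .
  qed
  obtain B where B: "\<forall>x\<in>closure \<Omega>. norm (u x) \<le> B"
    using u_hol unfolding holder_on_def bounded_iff by blast
  define Mu where "Mu = \<bar>B\<bar>"
  have Mu0: "Mu \<ge> 0" unfolding Mu_def by simp
  have Mu: "\<forall>x\<in>closure \<Omega>. \<bar>u x\<bar> \<le> Mu"
  proof
    fix x assume "x \<in> closure \<Omega>"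
    then have "norm (u x) \<le> B" using B by blast
    then show "\<bar>u x\<bar> \<le> Mu" unfolding Mu_def by simp
  qed
  obtain Lf0 where Lf0: "holder_const \<alpha> Lf0 \<Omega> f" using f_hol unfolding holder_on_def by blast
  define Lf where "Lf = \<bar>Lf0\<bar>"
  have Lf: "Lf \<ge> 0" unfolding Lf_def by simp
  have holf: "\<forall>x\<in>\<Omega>. \<forall>y\<in>\<Omega>. \<bar>f x - f y\<bar> \<le> Lf * dist x y powr \<alpha>"
  proof (intro ballI)
    fix x y assume "x \<in> \<Omega>" "y \<in> \<Omega>"
    then have "\<bar>f x - f y\<bar> \<le> Lf0 * dist x y powr \<alpha>" using Lf0 unfolding holder_const_def by blast
    also have "\<dots> \<le> Lf * dist x y powr \<alpha>" unfolding Lf_def by (intro mult_right_mono) auto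
    finally show "\<bar>f x - f y\<bar> \<le> Lf * dist x y powr \<alpha>" .
  qed
  have holf2: "\<forall>x\<in>\<Omega>. \<forall>y\<in>\<Omega>. \<bar>- f x - - f y\<bar> \<le> Lf * dist x y powr \<alpha>"
  proof (intro ballI)
    fix x y assume "x \<in> \<Omega>" "y \<in> \<Omega>"
    then have "\<bar>f x - f y\<bar> \<le> Lf * dist x y powr \<alpha>" using holf by blast
    then show "\<bar>- f x - - f y\<bar> \<le> Lf * dist x y powr \<alpha>" by (simp only: minus_diff_minus abs_minus_cancel)
  qed
  have holu2: "\<forall>x\<in>closure \<Omega>. \<forall>y\<in>closure \<Omega>. \<bar>- u x - - u y\<bar> \<le> Lu * dist x y powr \<alpha>"
  proof (intro ballI)
    fix x y assume "x \<in> closure \<Omega>" "y \<in> closure \<Omega>"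
    then have "\<bar>u x - u y\<bar> \<le> Lu * dist x y powr \<alpha>" using holu by blast
    then show "\<bar>- u x - - u y\<bar> \<le> Lu * dist x y powr \<alpha>" by (simp only: minus_diff_minus abs_minus_cancel)
  qed
  have Mu2: "\<forall>x\<in>closure \<Omega>. \<bar>- u x\<bar> \<le> Mu" using Mu by simp
  have contu2: "continuous_on (closure \<Omega>) (\<lambda>x. - u x)" using contu by (intro continuous_intros)
  have "\<alpha> \<in> {0..1}" using alpha by simp
  then have "holder_on \<alpha> (frontier \<Omega>) g \<longrightarrow> (\<exists>L C. \<forall>\<epsilon>>0. holder_on \<alpha> (closure \<Omega>) (gt \<epsilon>) \<and> holder_const \<alpha> L (closure \<Omega>) (gt \<epsilon>)
                 \<and> (\<forall>x\<in>frontier \<Omega>. \<bar>g x - gt \<epsilon> x\<bar> \<le> C * \<epsilon> powr \<alpha>))"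
    by (rule bspec[OF BC2(2)])
  then have "\<exists>L C. \<forall>\<epsilon>>0. holder_on \<alpha> (closure \<Omega>) (gt \<epsilon>) \<and> holder_const \<alpha> L (closure \<Omega>) (gt \<epsilon>)
                 \<and> (\<forall>x\<in>frontier \<Omega>. \<bar>g x - gt \<epsilon> x\<bar> \<le> C * \<epsilon> powr \<alpha>)"
    using g_hol by (rule mp)
  then obtain Lg0 Cg0 where gt: "\<forall>\<epsilon>>0. holder_on \<alpha> (closure \<Omega>) (gt \<epsilon>) \<and> holder_const \<alpha> Lg0 (closure \<Omega>) (gt \<epsilon>)
                 \<and> (\<forall>x\<in>frontier \<Omega>. \<bar>g x - gt \<epsilon> x\<bar> \<le> Cg0 * \<epsilon> powr \<alpha>)"
    by (elim exE)
  define Lg where "Lg = \<bar>Lg0\<bar>"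
  define Cg where "Cg = \<bar>Cg0\<bar>"
  have Lg: "Lg \<ge> 0" and Cg: "Cg \<ge> 0" unfolding Lg_def Cg_def by simp_all
  obtain c0 where c0: "c0 > 0" and sgn: "(\<forall>y\<in>\<Omega>. f y \<ge> c0) \<or> (\<forall>y\<in>\<Omega>. f y \<le> - c0)"
    using RHS2a by blast
  have sgn2: "(\<forall>y\<in>\<Omega>. - f y \<ge> c0) \<or> (\<forall>y\<in>\<Omega>. - f y \<le> - c0)"
    using sgn
  proof
    assume "\<forall>y\<in>\<Omega>. f y \<ge> c0"
    then have "\<forall>y\<in>\<Omega>. - f y \<le> - c0" by simp
    then show ?thesis by (rule disjI2)
  next
    assume A: "\<forall>y\<in>\<Omega>. f y \<le> - c0"
    have "\<forall>y\<in>\<Omega>. - f y \<ge> c0"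
    proof
      fix y assume "y \<in> \<Omega>" then have "f y \<le> - c0" using A by blast
      then show "- f y \<ge> c0" by linarith
    qed
    then show ?thesis by (rule disjI1)
  qed
  define gam where "gam = \<alpha>\<^sup>2/(2+\<alpha>)"
  have gam: "gam > 0" unfolding gam_def using alpha by simp
  define c2a where "c2a = c\<^sub>2 powr \<alpha>"
  have c2a: "c2a \<ge> 0" unfolding c2a_def by simp
  define Keta where "Keta = 2*Lf*c2a + c2a + Lu*((2*k\<^sub>2) powr \<alpha> / c\<^sub>1\<^sup>2) + 2*Lu*(2 / c\<^sub>1\<^sup>2)"
  have Keta: "Keta \<ge> 0" unfolding Keta_def using Lf Lu c2a by simp
  define C where "C = 4*Mu*Keta/c0 + 2*Lu*c2a + (2*Lu + Cg + 2*Lg)*c2a + Lu + 1"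
  have Cpos: "C > 0"
  proof -
    have "4*Mu*Keta/c0 \<ge> 0" using Mu0 Keta c0 by simp
    moreover have "2*Lu*c2a \<ge> 0" using Lu c2a by simp
    moreover have "(2*Lu + Cg + 2*Lg)*c2a \<ge> 0" using Lu c2a Cg Lg by simp
    ultimately show ?thesis unfolding C_def using Lu by linarith
  qed
  define q where "q = c0/(2*(Keta+1))"
  have q: "q > 0" unfolding q_def using c0 Keta by simp
  define h0 where "h0 = min 1 (q powr (1/gam))"
  have h0: "h0 > 0" unfolding h0_def using q by simp
  show ?thesis
  proof (rule exI[of _ C], rule exI[of _ h0], intro conjI Cpos h0 allI impI ballI, elim conjE)
    fix Tr :: "'a set set" and es th S uh x
    assume x: "x \<in> mesh_domain Tr"
    assume mesh: "mesh Tr" and qu: "quasiuniform \<sigma> Tr" and hh0: "mesh_size Tr < h0"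
      and inn: "inner_set \<Omega> (mesh_size Tr) \<subseteq> mesh_domain Tr" and md: "mesh_domain Tr \<subseteq> \<Omega>"
      and hes: "mesh_size Tr \<le> es" and esd: "es \<le> diameter \<Omega>" and th0: "0 < th" and th1: "th \<le> 1"
      and e1: "c\<^sub>1 * mesh_size Tr powr (\<alpha> / (2 + \<alpha>)) \<le> es"
      and e2: "es \<le> c\<^sub>2 * mesh_size Tr powr (\<alpha> / (2 + \<alpha>))"
      and t1: "k\<^sub>1 * mesh_size Tr \<le> es * th" and t2: "es * th \<le> k\<^sub>2 * mesh_size Tr"
      and dirs: "direction_set th S" and ds: "discrete_solution \<Omega> Tr es S f (gt es) uh"
    define h where "h = mesh_size Tr"
    have hpos: "h > 0" unfolding h_def by (rule mesh_size_pos[OF mesh])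
    have h1: "h \<le> 1" using hh0 unfolding h_def h0_def by simp
    have es0: "es > 0" using hpos hes unfolding h_def by simp
    have k2: "k\<^sub>2 \<ge> 0" using params by simp
    note R = rate_bounds[OF alpha hpos h1 params(1,2) k2 e1[folded h_def] e2[folded h_def] t2[folded h_def] th0]
    define eta where "eta = Lf*(2*es) powr \<alpha> + es powr \<alpha> + (Lu*(2*es*th) powr \<alpha> + 2*Lu*(2*h) powr \<alpha>)/es\<^sup>2"
    define H where "H = h powr gam"
    have H0: "H \<ge> 0" unfolding H_def by simp
    have r1: "es powr \<alpha> \<le> c2a * H" using R(1) unfolding H_def gam_def c2a_def .
    have r2: "(2*es) powr \<alpha> \<le> 2*c2a*H" using R(2) unfolding H_def gam_def c2a_def .
    have r3: "(2*es*th) powr \<alpha> / es\<^sup>2 \<le> (2*k\<^sub>2) powr \<alpha> / c\<^sub>1\<^sup>2 * H" using R(3) unfolding H_def gam_def .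
    have r4: "(2*h) powr \<alpha> / es\<^sup>2 \<le> 2 / c\<^sub>1\<^sup>2 * H" using R(4) unfolding H_def gam_def .
    have r5: "h powr \<alpha> \<le> H" using R(5) unfolding H_def gam_def .
    have etaK: "eta \<le> Keta * H"
    proof -
      have "eta = Lf*(2*es) powr \<alpha> + es powr \<alpha> + Lu*((2*es*th) powr \<alpha> / es\<^sup>2) + 2*Lu*((2*h) powr \<alpha> / es\<^sup>2)"
        unfolding eta_def by (simp add: add_divide_distrib)
      also have "\<dots> \<le> Lf*(2*c2a*H) + c2a*H + Lu*((2*k\<^sub>2) powr \<alpha> / c\<^sub>1\<^sup>2 * H) + 2*Lu*(2 / c\<^sub>1\<^sup>2 * H)"
      proof (intro add_mono)
        show "Lf*(2*es) powr \<alpha> \<le> Lf*(2*c2a*H)" using r2 Lf by (rule mult_left_mono)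
        show "es powr \<alpha> \<le> c2a*H" by (rule r1)
        show "Lu*((2*es*th) powr \<alpha> / es\<^sup>2) \<le> Lu*((2*k\<^sub>2) powr \<alpha> / c\<^sub>1\<^sup>2 * H)" using r3 Lu by (rule mult_left_mono)
        show "2*Lu*((2*h) powr \<alpha> / es\<^sup>2) \<le> 2*Lu*(2 / c\<^sub>1\<^sup>2 * H)" using r4 Lu by (intro mult_left_mono) auto
      qed
      also have "\<dots> = Keta * H" unfolding Keta_def by (simp add: algebra_simps)
      finally show ?thesis .
    qed
    have Hq: "H < q"
    proof -
      have "h < q powr (1/gam)" using hh0 unfolding h_def h0_def by simp
      then have "h powr gam < (q powr (1/gam)) powr gam" using gam hpos by (intro powr_less_mono2) auto
      also have "\<dots> = q" using q gam by (simp add: powr_powr)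
      finally show ?thesis unfolding H_def .
    qed
    have etapos: "eta > 0"
    proof -
      have "es powr \<alpha> > 0" using es0 by simp
      moreover have "Lf*(2*es) powr \<alpha> \<ge> 0" using Lf by simp
      moreover have "(Lu*(2*es*th) powr \<alpha> + 2*Lu*(2*h) powr \<alpha>)/es\<^sup>2 \<ge> 0" using Lu by simp
      ultimately show ?thesis unfolding eta_def by linarith
    qed
    have etac: "eta < c0/2"
    proof -
      have "Keta * H \<le> (Keta + 1) * H" using H0 by (simp add: algebra_simps)
      also have "\<dots> < (Keta + 1) * q" using Hq Keta by (intro mult_strict_left_mono) auto
      also have "\<dots> = c0/2" unfolding q_def using Keta by (simp add: field_simps)
      finally show ?thesis using etaK by simp
    qed
    obtain lam1 where lam1: "lam1 > 0" "\<bar>lam1 - 1\<bar> \<le> 2*eta/c0" "\<forall>y\<in>\<Omega>. lam1*(f y + eta) < f y"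
      using lam_exists[OF c0 etapos etac sgn] by blast
    obtain lam2 where lam2: "lam2 > 0" "\<bar>lam2 - 1\<bar> \<le> 2*eta/c0" "\<forall>y\<in>\<Omega>. lam2*(- f y + eta) < - f y"
      using lam_exists[OF c0 etapos etac sgn2] by blast
    have eta2: "2*eta/c0 \<le> 1" using etac c0 by (simp add: field_simps)
    have UV: "uh \<in> Vh Tr" using ds unfolding discrete_solution_def by blast
    define Eb where "Eb = Lu*(2*es) powr \<alpha> + Cg*es powr \<alpha> + Lg*(2*es) powr \<alpha>"
    have Ncl: "nodes Tr \<subseteq> closure \<Omega>" using mesh_in_closure[OF mesh qu sigma md] nodes_in_union by blast
    have bnd: "\<bar>u z - uh z\<bar> \<le> Eb" if z: "z \<in> nodes Tr - interior_nodes \<Omega> Tr es" for z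
    proof -
      have zb: "z \<in> boundary_nodes \<Omega> Tr es" using z unfolding boundary_nodes_def by blast
      then have uhz: "uh z = gt es z" using ds unfolding discrete_solution_def by blast
      have zcl: "z \<in> closure \<Omega>" using z Ncl by blast
      have "z \<notin> inner_set \<Omega> (2*es)" using z unfolding interior_nodes_def by blast
      moreover have "0 \<le> 2*es" using es0 by simp
      ultimately have "\<exists>y\<in>frontier \<Omega>. dist z y \<le> 2*es" by (rule near_frontier[OF op fne zcl])
      then obtain y where y: "y \<in> frontier \<Omega>" "dist z y \<le> 2*es" by blast
      have ycl: "y \<in> closure \<Omega>" using y(1) unfolding frontier_def by blast
      have A: "\<bar>u z - u y\<bar> \<le> Lu * (2*es) powr \<alpha>"
        using zcl ycl y(2) alpha by (intro hol_bound[OF holu Lu]) auto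
      have "\<bar>g y - gt es y\<bar> \<le> Cg0 * es powr \<alpha>" using gt es0 y(1) by blast
      also have "\<dots> \<le> Cg * es powr \<alpha>" unfolding Cg_def by (intro mult_right_mono) auto
      finally have Bb: "\<bar>g y - gt es y\<bar> \<le> Cg * es powr \<alpha>" .
      have hg: "holder_const \<alpha> Lg0 (closure \<Omega>) (gt es)" using gt es0 by blast
      have hg2: "\<forall>a\<in>closure \<Omega>. \<forall>b\<in>closure \<Omega>. \<bar>gt es a - gt es b\<bar> \<le> Lg * dist a b powr \<alpha>"
      proof (intro ballI)
        fix a b assume "a \<in> closure \<Omega>" "b \<in> closure \<Omega>"
        then have "\<bar>gt es a - gt es b\<bar> \<le> Lg0 * dist a b powr \<alpha>" using hg unfolding holder_const_def by blast
        also have "\<dots> \<le> Lg * dist a b powr \<alpha>" unfolding Lg_def by (intro mult_right_mono) auto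
        finally show "\<bar>gt es a - gt es b\<bar> \<le> Lg * dist a b powr \<alpha>" .
      qed
      have Cc: "\<bar>gt es y - gt es z\<bar> \<le> Lg * (2*es) powr \<alpha>"
        using zcl ycl y(2) alpha by (intro hol_bound[OF hg2 Lg]) (auto simp: dist_commute)
      have "u y = g y" using bc y(1) by blast
      then show ?thesis using A Bb Cc uhz unfolding Eb_def by linarith
    qed
    have stfacts: "finite (stencil es S z) \<and> stencil es S z \<noteq> {} \<and> stencil es S z \<subseteq> \<Union>Tr"
      if z: "z \<in> interior_nodes \<Omega> Tr es" for z
    proof (intro conjI)
      show "finite (stencil es S z)" using dirs unfolding stencil_def direction_set_def by simp
      show "stencil es S z \<noteq> {}" unfolding stencil_def by simp
      show "stencil es S z \<subseteq> \<Union>Tr"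
        using interior_node_facts(2)[OF op z inn[folded h_def] hes[folded h_def] es0 dirs] by (simp add: h_def)
    qed
    have eq1: "\<forall>z\<in>interior_nodes \<Omega> Tr es. 2*uh z - Max (uh ` stencil es S z) - Min (uh ` stencil es S z) = es\<^sup>2 * f z"
    proof
      fix z assume z: "z \<in> interior_nodes \<Omega> Tr es"
      have li: "lagrange_interp Tr uh ` stencil es S z = uh ` stencil es S z"
      proof (rule image_cong[OF refl])
        fix y assume "y \<in> stencil es S z"
        then have "y \<in> \<Union>Tr" using stfacts[OF z] by blast
        then show "lagrange_interp Tr uh y = uh y" by (rule lagrange_eq[OF mesh UV])
      qed
      have "neg_disc_inf_lap Tr es S uh z = f z" using ds z unfolding discrete_solution_def by blast
      then have "(2*uh z - Max (uh ` stencil es S z) - Min (uh ` stencil es S z)) / es\<^sup>2 = f z"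
        unfolding neg_disc_inf_lap_def li .
      then show "2*uh z - Max (uh ` stencil es S z) - Min (uh ` stencil es S z) = es\<^sup>2 * f z"
        using es0 by (simp add: field_simps)
    qed
    have eq2: "\<forall>z\<in>interior_nodes \<Omega> Tr es. 2*(- uh z) - Max ((\<lambda>x. - uh x) ` stencil es S z)
        - Min ((\<lambda>x. - uh x) ` stencil es S z) = es\<^sup>2 * (- f z)"
    proof
      fix z assume z: "z \<in> interior_nodes \<Omega> Tr es"
      have "Max ((\<lambda>x. - uh x) ` stencil es S z) = - Min (uh ` stencil es S z)"
        using stfacts[OF z] by (intro Max_neg_img) auto
      moreover have "Min ((\<lambda>x. - uh x) ` stencil es S z) = - Max (uh ` stencil es S z)"
        using stfacts[OF z] by (intro Min_neg_img) auto
      ultimately show "2*(- uh z) - Max ((\<lambda>x. - uh x) ` stencil es S z)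
        - Min ((\<lambda>x. - uh x) ` stencil es S z) = es\<^sup>2 * (- f z)"
        using eq1 z by (simp add: algebra_simps)
    qed
    have bd1: "\<forall>z\<in>nodes Tr - interior_nodes \<Omega> Tr es. u z - uh z \<le> Eb" using bnd by fastforce
    have bd2: "\<forall>z\<in>nodes Tr - interior_nodes \<Omega> Tr es. - u z - - uh z \<le> Eb" using bnd by fastforce
    have side1: "u x - uh x \<le> 2*\<bar>lam1 - 1\<bar>*Mu + lam1*Lu*es powr \<alpha> + Eb + Lu * mesh_size Tr powr \<alpha>"
      using one_side[OF op qs1 contu holu Mu Lu alpha(1) holf Lf mesh qu sigma inn md hes dirs th0 UV eq1 bd1
          lam1(1) lam1(3) eta_def[unfolded h_def]] x by blast
    have side2: "- u x - - uh x \<le> 2*\<bar>lam2 - 1\<bar>*Mu + lam2*Lu*es powr \<alpha> + Eb + Lu * mesh_size Tr powr \<alpha>"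
      using one_side[OF op qs2 contu2 holu2 Mu2 Lu alpha(1) holf2 Lf mesh qu sigma inn md hes dirs th0
          Vh_neg[OF UV] eq2 bd2 lam2(1) lam2(3) eta_def[unfolded h_def]] x by blast
    have fin: "2*\<bar>lam - 1\<bar>*Mu + lam*Lu*es powr \<alpha> + Eb + Lu * mesh_size Tr powr \<alpha> \<le> C * H"
      if lam: "lam > 0" "\<bar>lam - 1\<bar> \<le> 2*eta/c0" for lam
    proof -
      have "2*\<bar>lam - 1\<bar>*Mu + lam*Lu*es powr \<alpha> + (Lu*(2*es) powr \<alpha> + Cg*es powr \<alpha> + Lg*(2*es) powr \<alpha>) + Lu * h powr \<alpha>
          \<le> (4*Mu*Keta/c0 + 2*Lu*c2a + (2*Lu + Cg + 2*Lg)*c2a + Lu + 1) * H"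
        by (rule final_arith[OF Mu0 Lu Cg Lg Keta H0 c2a c0 lam(2) lam(1) etaK eta2 _ r1 _ r2 r5]) (use es0 in auto)
      then show ?thesis unfolding C_def Eb_def h_def by simp
    qed
    have s1: "u x - uh x \<le> C * H" using side1 fin[OF lam1(1,2)] by (rule order_trans)
    have s2: "- u x - - uh x \<le> C * H" using side2 fin[OF lam2(1,2)] by (rule order_trans)
    have "\<bar>u x - uh x\<bar> \<le> C * H" using s1 s2 by (simp add: abs_le_iff)
    then show "\<bar>u x - uh x\<bar> \<le> C * mesh_size Tr powr (\<alpha>\<^sup>2 / (2 + \<alpha>))" by (simp only: H_def gam_def h_def)
  qed
qed

end
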